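(* If $u$ is a standard Lyndon–Shirshov word in $x_1,\dots,x_n$ that does not contain $x_n$, then either $u=x_kx_{k+1}\cdots x_m$ for some $1\le k\le m<n$, or $[u]=0$ in $U_q^+(\mathfrak{sp}_{2n})$, where $[u]$ denotes $u$ with the standard arrangement of (skew) brackets.
   Context: Let $\mathbf{k}$ be a field, $G$ an abelian group, $n\ge 2$, $X=\{x_1,\dots,x_n\}$, $g_i\in G$, characters $\chi^i:G\to\mathbf{k}^*$, $p_{ij}=\chi^i(g_j)$; for words $u,v$, $p(u,v)=\chi^u(g_v)$ where $g_u,\chi^u$ replace $x_i$ by $g_i$, resp. $\chi^i$. $G\langle X\rangle$: skew group algebra with $x_ig=\chi^i(g)gx_i$; skew bracket $[u,v]=uv-p(u,v)vu$. Fix $q\in\mathbf{k}^*$, $q^3\ne1$, $q\ne-1$; assume $p_{ii}=q$ ($i<n$), $p_{nn}=q^2$, $p_{i,i-1}p_{i-1,i}=q^{-1}$ ($1<i<n$), $p_{n-1,n}p_{n,n-1}=q^{-2}$, $p_{ij}p_{ji}=1$ ($j>i+1$). $U_q^+(\mathfrak{sp}_{2n})$ is the quotient of $G\langle X\rangle$ by the ideal generated by $[x_i,[x_i,x_{i+1}]]$, $[[x_i,x_{i+1}],x_{i+1}]$ ($1\le i<n-1$), $[x_i,x_j]$ ($j>i+1$), $[[x_{n-1},x_n],x_n]$, $[x_{n-1},[x_{n-1},[x_{n-1},x_n]]]$. Order $x_1>x_2>\dots>x_n$, and order words lexicographically from left to right, a proper beginning of a word being greater than the word. A nonempty word $u$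 is standard (Lyndon–Shirshov) if $vw>wv$ for every decomposition $u=vw$ with $v,w$ nonempty. The standard bracketing is defined inductively: $[x_i]=x_i$, and for a standard word $u$ of length $\ge2$, $[u]=[[v],[w]]$ where $u=vw$ with $v,w$ standard and $v$ of minimal possible length. *)

theory Defs
  imports Main "HOL-Library.Poly_Mapping"
begin

(* Letters x_1,...,x_n are encoded as natural numbers 1..n; words are nat lists.
   The abelian group G is a type 'g :: ab_group_add (written additively),
   the field k is a type 'k :: field.
   chi i : G -> k is the character chi^i, g i \<in> G is g_i. *)

definition chi_word :: "(nat \<Rightarrow> 'g \<Rightarrow> 'k::field) \<Rightarrow> nat list \<Rightarrow> 'g \<Rightarrow> 'k" where
  "chi_word chi u h = prod_list (map (\<lambda>i. chi i h) u)"

definition g_word :: "(nat \<Rightarrow> 'g::ab_group_add) \<Rightarrow> nat list \<Rightarrow> 'g" where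
  "g_word g v = sum_list (map g v)"

definition pw :: "(nat \<Rightarrow> 'g::ab_group_add \<Rightarrow> 'k::field) \<Rightarrow> (nat \<Rightarrow> 'g) \<Rightarrow> nat list \<Rightarrow> nat list \<Rightarrow> 'k" where
  "pw chi g u v = chi_word chi u (g_word g v)"

(* Elements of the skew group algebra G<X>: finite k-linear combinations of
   basis elements g*w (g \<in> G, w a word), encoded as (g, w). *)
type_synonym ('g, 'k) sga = "('g \<times> nat list) \<Rightarrow>\<^sub>0 'k"

(* multiplication: (g u)(h v) = chi^u(h) (g h)(u v), i.e. x_i h = chi^i(h) h x_i *)
definition sga_mul :: "(nat \<Rightarrow> 'g::ab_group_add \<Rightarrow> 'k::field) \<Rightarrow> ('g, 'k) sga \<Rightarrow> ('g, 'k) sga \<Rightarrow> ('g, 'k) sga" where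
  "sga_mul chi a b =
     (\<Sum>x\<in>Poly_Mapping.keys a. \<Sum>y\<in>Poly_Mapping.keys b.
        Poly_Mapping.single (fst x + fst y, snd x @ snd y)
          (Poly_Mapping.lookup a x * Poly_Mapping.lookup b y * chi_word chi (snd x) (fst y)))"

definition sga_const :: "'k::field \<Rightarrow> ('g::ab_group_add, 'k) sga" where
  "sga_const c = Poly_Mapping.single (0, []) c"

definition sga_X :: "nat \<Rightarrow> ('g::ab_group_add, 'k::field) sga" where
  "sga_X i = Poly_Mapping.single (0, [i]) 1"

(* skew bracket [a,b] = ab - p(u,v) ba for a homogeneous of degree (word) u, b of degree v *)
definition sbr :: "(nat \<Rightarrow> 'g::ab_group_add \<Rightarrow> 'k::field) \<Rightarrow> (nat \<Rightarrow> 'g) \<Rightarrow>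
     nat list \<Rightarrow> ('g, 'k) sga \<Rightarrow> nat list \<Rightarrow> ('g, 'k) sga \<Rightarrow> ('g, 'k) sga" where
  "sbr chi g u a v b = sga_mul chi a b - sga_mul chi (sga_mul chi (sga_const (pw chi g u v)) b) a"

inductive_set sga_ideal :: "(nat \<Rightarrow> 'g::ab_group_add \<Rightarrow> 'k::field) \<Rightarrow> ('g, 'k) sga set \<Rightarrow> ('g, 'k) sga set"
  for chi R where
  gen: "r \<in> R \<Longrightarrow> r \<in> sga_ideal chi R"
| zero: "0 \<in> sga_ideal chi R"
| add: "a \<in> sga_ideal chi R \<Longrightarrow> b \<in> sga_ideal chi R \<Longrightarrow> a + b \<in> sga_ideal chi R"
| lmul: "a \<in> sga_ideal chi R \<Longrightarrow> sga_mul chi c a \<in> sga_ideal chi R"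
| rmul: "a \<in> sga_ideal chi R \<Longrightarrow> sga_mul chi a c \<in> sga_ideal chi R"

definition sp_rels :: "nat \<Rightarrow> (nat \<Rightarrow> 'g::ab_group_add \<Rightarrow> 'k::field) \<Rightarrow> (nat \<Rightarrow> 'g) \<Rightarrow> ('g, 'k) sga set" where
  "sp_rels n chi g =
     {sbr chi g [i] (sga_X i) [i, i+1] (sbr chi g [i] (sga_X i) [i+1] (sga_X (i+1))) | i. 1 \<le> i \<and> i < n - 1}
   \<union> {sbr chi g [i, i+1] (sbr chi g [i] (sga_X i) [i+1] (sga_X (i+1))) [i+1] (sga_X (i+1)) | i. 1 \<le> i \<and> i < n - 1}
   \<union> {sbr chi g [i] (sga_X i) [j] (sga_X j) | i j. 1 \<le> i \<and> i + 1 < j \<and> j \<le> n}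
   \<union> {sbr chi g [n-1, n] (sbr chi g [n-1] (sga_X (n-1)) [n] (sga_X n)) [n] (sga_X n)}
   \<union> {sbr chi g [n-1] (sga_X (n-1)) [n-1, n-1, n]
        (sbr chi g [n-1] (sga_X (n-1)) [n-1, n]
          (sbr chi g [n-1] (sga_X (n-1)) [n] (sga_X n)))}"

definition zero_in_U :: "nat \<Rightarrow> (nat \<Rightarrow> 'g::ab_group_add \<Rightarrow> 'k::field) \<Rightarrow> (nat \<Rightarrow> 'g) \<Rightarrow> ('g, 'k) sga \<Rightarrow> bool" where
  "zero_in_U n chi g a \<longleftrightarrow> a \<in> sga_ideal chi (sp_rels n chi g)"

(* Word order: x_1 > x_2 > ... > x_n, i.e. letter i is greater than letter j iff i < j;
   lexicographic from the left; a proper beginning of a word is greater than the word. *)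
definition word_gt :: "nat list \<Rightarrow> nat list \<Rightarrow> bool" where
  "word_gt u v \<longleftrightarrow>
     (\<exists>w. w \<noteq> [] \<and> v = u @ w) \<or>
     (\<exists>p a b s t. u = p @ a # s \<and> v = p @ b # t \<and> a < b)"

definition standard :: "nat list \<Rightarrow> bool" where
  "standard u \<longleftrightarrow> u \<noteq> [] \<and>
     (\<forall>v w. v \<noteq> [] \<longrightarrow> w \<noteq> [] \<longrightarrow> u = v @ w \<longrightarrow> word_gt (v @ w) (w @ v))"

definition std_split :: "nat list \<Rightarrow> nat" where
  "std_split u = (LEAST k. 0 < k \<and> k < length u \<and> standard (take k u) \<and> standard (drop k u))"

function std_bracket :: "(nat \<Rightarrow> 'g::ab_group_add \<Rightarrow> 'k::field) \<Rightarrow> (nat \<Rightarrow> 'g) \<Rightarrow> nat list \<Rightarrow> ('g, 'k) sga" where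
  "std_bracket chi g u =
     (if length u = 1 then sga_X (hd u)
      else (let k = std_split u in
            if 0 < k \<and> k < length u then
              sbr chi g (take k u) (std_bracket chi g (take k u))
                        (drop k u) (std_bracket chi g (drop k u))
            else 0))"
  by pat_completeness auto
termination by (relation "measure (\<lambda>(_, _, u). length u)") auto

end

theory Submission imports Defs "HOL-Library.List_Lexorder" begin


declare upt_Suc[simp del]

lemma word_gt_less: "word_gt u v \<longleftrightarrow> u < (v::nat list)"
proof -
  have "word_gt u v \<longleftrightarrow> (u, v) \<in> lexord {(a,b). a < b}"
  proof
    assume "word_gt u v"
    then show "(u, v) \<in> lexord {(a,b). a < b}"
      unfolding word_gt_def
    proof (elim disjE exE conjE)
      fix w assume "w \<noteq> []" "v = u @ w"
      then show ?thesis by (cases w) (auto simp: lexord_append_rightI)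
    next
      fix p a b s t assume "u = p @ a # s" "v = p @ b # t" "a < b"
      then show ?thesis by (simp add: lexord_append_left_rightI)
    qed
  next
    assume "(u, v) \<in> lexord {(a,b). a < b}"
    then show "word_gt u v" unfolding word_gt_def lexord_def
      apply simp
      apply (elim exE disjE conjE)
       apply blast
      apply (rule disjI2)
      apply (intro exI conjI, assumption, assumption, assumption)
      done
  qed
  then show ?thesis by (simp add: list_less_def)
qed

lemma standard_iff: "standard u \<longleftrightarrow> u \<noteq> [] \<and> (\<forall>v w. v \<noteq> [] \<longrightarrow> w \<noteq> [] \<longrightarrow> u = v @ w \<longrightarrow> v @ w < w @ (v::nat list))"
  unfolding standard_def word_gt_less by blast

lemma L_ext:
  assumes "x < (y::nat list)" "\<not> (\<exists>z. y = x @ z)"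
  shows "x @ a < y @ b"
proof -
  from assms(1) have "(x, y) \<in> lexord {(a,b). a < b}" by (simp add: list_less_def)
  then obtain p c d s t where "x = p @ c # s" "y = p @ d # t" "c < d"
    using assms(2) unfolding lexord_def by auto
  then show ?thesis by (simp add: list_less_def lexord_append_left_rightI)
qed

lemma prefix_less: "w \<noteq> [] \<Longrightarrow> (x::nat list) < x @ w"
  by (cases w) (auto simp: list_less_def lexord_append_rightI)

lemma same_pref_less: "((x::nat list) @ a < x @ b) \<longleftrightarrow> a < b"
  by (simp add: list_less_def irrefl_def)

lemma eqlen_less:
  assumes "(v::nat list) @ w < z @ w'" "length v = length z" "length w = length w'" "v \<noteq> z"
  shows "v < z"
  using assms lexord_sufE unfolding list_less_def by blast

lemma std_suf:
  assumes "standard u" "u = v @ w" "v \<noteq> []" "w \<noteq> []"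
  shows "u < w"
proof (rule ccontr)
  assume nl: "\<not> u < w"
  have "u \<noteq> w" using assms by auto
  with nl have wu: "w < u" by auto
  have rot: "\<And>a b. a \<noteq> [] \<Longrightarrow> b \<noteq> [] \<Longrightarrow> u = a @ b \<Longrightarrow> a @ b < b @ a"
    using assms(1) standard_iff by blast
  show False
  proof (cases "\<exists>z. u = w @ z")
    case True
    then obtain z where z: "u = w @ z" by blast
    have lz: "length z = length v" using z assms(2) by (metis add_left_cancel length_append add.commute)
    hence zne: "z \<noteq> []" using assms(3) by auto
    have "v @ w < w @ v" using rot assms by blast
    hence "w @ z < w @ v" using z assms(2) by simp
    hence zv: "z < v" by (simp add: same_pref_less)
    have "w @ z < z @ w" using rot[OF assms(4) zne] z by blast
    hence "v @ w < z @ w" using z assms(2) by simp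
    moreover have "v \<noteq> z" using zv by auto
    ultimately have "v < z" using eqlen_less lz by auto
    with zv show False by auto
  next
    case False
    have "w @ v < u @ []" using L_ext[OF wu False] .
    moreover have "v @ w < w @ v" using rot assms by blast
    ultimately show False using assms(2) by auto
  qed
qed

lemma std_conv:
  assumes "u \<noteq> []" "\<And>v w. v \<noteq> [] \<Longrightarrow> w \<noteq> [] \<Longrightarrow> u = v @ w \<Longrightarrow> u < (w::nat list)"
  shows "standard u"
  unfolding standard_iff
proof (intro conjI allI impI)
  show "u \<noteq> []" by fact
  fix v w :: "nat list" assume h: "v \<noteq> []" "w \<noteq> []" "u = v @ w"
  have uw: "u < w" using assms(2) h by blast
  have np: "\<not> (\<exists>z. w = u @ z)"
  proof
    assume "\<exists>z. w = u @ z"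
    then obtain z where "w = u @ z" by blast
    hence "length w = length v + length w + length z" using h by (metis length_append add.assoc)
    with h show False by simp
  qed
  have "u @ [] < w @ v" by (rule L_ext[OF uw np])
  then show "v @ w < w @ v" using h by simp
qed

lemma std_split_exists:
  assumes "standard u" "2 \<le> length u"
  shows "\<exists>k. 0 < k \<and> k < length u \<and> standard (take k u) \<and> standard (drop k u)"
proof -
  define S where "S = (\<lambda>i. drop i u) ` {i. 0 < i \<and> i < length u}"
  have fin: "finite S" unfolding S_def by simp
  have ne: "S \<noteq> {}" unfolding S_def using assms(2) by auto
  define w where "w = Min S"
  have "w \<in> S" unfolding w_def using fin ne by simp
  then obtain i0 where i0: "0 < i0" "i0 < length u" "w = drop i0 u" unfolding S_def by auto
  have minS: "\<And>x. x \<in> S \<Longrightarrow> w \<le> x" unfolding w_def using fin by simp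
  have inS: "\<And>i. 0 < i \<Longrightarrow> i < length u \<Longrightarrow> drop i u \<in> S" unfolding S_def by auto
  define v where "v = take i0 u"
  have u: "u = v @ w" unfolding v_def i0 by simp
  have vne: "v \<noteq> []" and wne: "w \<noteq> []" using i0 unfolding v_def by auto
  have sw: "standard w"
  proof (rule std_conv[OF wne])
    fix a b :: "nat list" assume h: "a \<noteq> []" "b \<noteq> []" "w = a @ b"
    have "b = drop (i0 + length a) u" using h i0 by (metis add.commute drop_drop append_eq_conv_conj)
    moreover have "i0 + length a < length u" using h i0 by (metis length_append length_drop less_add_same_cancel1 length_greater_0_conv less_diff_conv add.commute)
    ultimately have "b \<in> S" using inS i0 by simp
    hence "w \<le> b" by (rule minS)
    moreover have "w \<noteq> b" using h by auto
    ultimately show "w < b" by auto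
  qed
  have sv: "standard v"
  proof (rule std_conv[OF vne])
    fix a s :: "nat list" assume h: "a \<noteq> []" "s \<noteq> []" "v = a @ s"
    have "u < s @ w" using std_suf[OF assms(1), of a "s @ w"] h u by simp
    show "v < s"
    proof (cases "\<exists>t. v = s @ t")
      case True
      then obtain t where t: "v = s @ t" by blast
      have tne: "t \<noteq> []" using t h by auto
      have "s @ t @ w < s @ w" using \<open>u < s @ w\<close> u t by simp
      hence tw: "t @ w < w" by (simp add: same_pref_less)
      have "t @ w = drop (length s) u" using u t by simp
      moreover have "0 < length s" "length s < length u" using h u t tne wne by auto
      ultimately have "t @ w \<in> S" using inS by simp
      hence "w \<le> t @ w" by (rule minS)
      with tw show ?thesis by auto
    next
      case False
      have "v \<noteq> s" using h by auto
      moreover have "\<not> s < v"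
      proof
        assume "s < v"
        hence "s @ w < v @ w" using L_ext False by blast
        with \<open>u < s @ w\<close> u show False by auto
      qed
      ultimately show ?thesis by auto
    qed
  qed
  show ?thesis using i0 sv sw unfolding v_def by (auto simp: i0(3))
qed

lemma upt_split: "i \<le> j \<Longrightarrow> j \<le> k \<Longrightarrow> [i..<k] = [i..<j] @ [j..<k]"
  using upt_add_eq_append[of i j "k - j"] by simp

lemma cons_less: "(x::nat) < y \<Longrightarrow> x # xs < y # ys"
  by (simp add: list_less_def)

lemma upt_Cons': "k < Suc m \<Longrightarrow> [k..<Suc m] = k # [Suc k..<Suc m]"
  by (simp add: upt_conv_Cons)

lemma std_intv: "k \<le> m \<Longrightarrow> standard [k..<Suc m]"
proof (rule std_conv)
  assume km: "k \<le> m"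
  show "[k..<Suc m] \<noteq> []" using km by simp
  fix a b :: "nat list" assume h: "a \<noteq> []" "b \<noteq> []" "[k..<Suc m] = a @ b"
  have b: "b = [k + length a..<Suc m]" using h(3) by (metis append_eq_conv_conj drop_upt)
  have "k + length a < Suc m" using b h(2) by (auto simp del: upt_Suc)
  hence "b = (k + length a) # [Suc (k + length a)..<Suc m]" using b upt_Cons' by auto
  moreover have "[k..<Suc m] = k # [Suc k..<Suc m]" using km upt_Cons' by auto
  moreover have "k < k + length a" using h(1) by simp
  ultimately show "[k..<Suc m] < b" using cons_less by simp
qed

lemma not_std_N1:
  assumes "s < k" "k \<le> m" "s \<le> t"
  shows "\<not> standard ([k..<Suc m] @ [s..<Suc t])"
proof
  assume st: "standard ([k..<Suc m] @ [s..<Suc t])"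
  have "[k..<Suc m] @ [s..<Suc t] < [s..<Suc t] @ [k..<Suc m]"
    using st assms unfolding standard_iff by (simp del: upt_Suc)
  moreover have "[s..<Suc t] @ [k..<Suc m] < [k..<Suc m] @ [s..<Suc t]"
    using assms by (simp add: upt_Cons' cons_less del: upt_Suc)
  ultimately show False by auto
qed

lemma not_std_N2:
  assumes "k \<le> t" "t \<le> m"
  shows "\<not> standard ([k..<Suc m] @ [k..<Suc t])"
proof
  assume st: "standard ([k..<Suc m] @ [k..<Suc t])"
  have lt: "[k..<Suc m] @ [k..<Suc t] < [k..<Suc t] @ [k..<Suc m]"
    using st assms unfolding standard_iff by (simp del: upt_Suc)
  show False
  proof (cases "t = m")
    case True then show False using lt by simp
  next
    case False
    have sp: "[k..<Suc m] = [k..<Suc t] @ [Suc t..<Suc m]"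
      using assms by (intro upt_split) auto
    have e1: "[k..<Suc t] @ [k..<Suc m] = [k..<Suc t] @ (k # [Suc k..<Suc m])"
      using assms by (simp add: upt_Cons' del: upt_Suc)
    have e3: "[Suc t..<Suc m] = Suc t # [Suc (Suc t)..<Suc m]" using assms False by (intro upt_Cons') auto
    have e2: "[k..<Suc m] @ [k..<Suc t] = [k..<Suc t] @ (Suc t # [Suc (Suc t)..<Suc m] @ [k..<Suc t])"
      by (simp only: sp e3 append_assoc append_Cons)
    have "[k..<Suc t] @ [k..<Suc m] < [k..<Suc m] @ [k..<Suc t]"
      unfolding e1 e2 same_pref_less using assms by (simp add: cons_less del: upt_Suc)
    with lt show False by auto
  qed
qed

lemma std_N3:
  assumes "s \<le> m" "m < t"
  shows "standard ([s..<Suc m] @ [s..<Suc t])"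
proof (rule std_conv)
  show "[s..<Suc m] @ [s..<Suc t] \<noteq> []" using assms by simp
  fix a b :: "nat list" assume h: "a \<noteq> []" "b \<noteq> []" "[s..<Suc m] @ [s..<Suc t] = a @ b"
  have b: "b = drop (length a) ([s..<Suc m] @ [s..<Suc t])" using h(3) by simp
  have u: "[s..<Suc m] @ [s..<Suc t] = s # ([Suc s..<Suc m] @ [s..<Suc t])"
    using assms by (subst upt_Cons') (auto simp del: upt_Suc)
  define L where "L = Suc m - s"
  have lenL: "length [s..<Suc m] = L" unfolding L_def by (simp only: length_upt)
  consider "length a < L" | "length a = L" | "length a > L" by linarith
  then show "[s..<Suc m] @ [s..<Suc t] < b"
  proof cases
    case 1
    have b1: "b = [s + length a..<Suc m] @ [s..<Suc t]" using b 1 lenL by simp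
    have "s + length a < Suc m" using 1 L_def by linarith
    hence "b = (s + length a) # ([Suc (s + length a)..<Suc m] @ [s..<Suc t])"
      unfolding b1 by (simp add: upt_Cons')
    then show ?thesis unfolding u using h(1) by (simp add: cons_less del: upt_Suc)
  next
    case 2
    have "b = [s..<Suc t]" using b 2 lenL by simp
    also have "\<dots> = [s..<Suc m] @ [Suc m..<Suc t]"
      using assms by (intro upt_split) auto
    also have "[Suc m..<Suc t] = Suc m # [Suc (Suc m)..<Suc t]"
      using assms by (intro upt_Cons') auto
    finally have bb: "b = [s..<Suc m] @ (Suc m # [Suc (Suc m)..<Suc t])" .
    have uu: "[s..<Suc m] @ [s..<Suc t] = [s..<Suc m] @ (s # [Suc s..<Suc t])"
      using assms by (simp add: upt_Cons' del: upt_Suc)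
    show ?thesis unfolding bb uu same_pref_less using assms by (simp add: cons_less del: upt_Suc)
  next
    case 3
    have "b = drop (length a - L) [s..<Suc t]" using b 3 lenL by simp
    also have "\<dots> = [s + (length a - L)..<Suc t]" by simp
    finally have bb: "b = [s + (length a - L)..<Suc t]" .
    have "s + (length a - L) < Suc t" using bb h(2) by (auto simp del: upt_Suc)
    hence "b = (s + (length a - L)) # [Suc (s + (length a - L))..<Suc t]" using bb upt_Cons' by auto
    moreover have "s < s + (length a - L)" using 3 by simp
    ultimately show ?thesis unfolding u using cons_less by presburger
  qed
qed




locale spctx =
  fixes chi :: "nat \<Rightarrow> 'g::ab_group_add \<Rightarrow> 'k::field" and g :: "nat \<Rightarrow> 'g"
  assumes chi_hom: "\<And>i a b. chi i (a + b) = chi i a * chi i b"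
    and chi_nz: "\<And>i a. chi i a \<noteq> 0"
begin

lemma chi0: "chi i 0 = 1"
proof -
  have "chi i 0 = chi i 0 * chi i 0" using chi_hom[of i 0 0] by simp
  thus ?thesis using chi_nz[of i 0] by (metis mult_cancel_left1)
qed

lemma cw_add: "chi_word chi u (a + b) = chi_word chi u a * chi_word chi u b"
  unfolding chi_word_def by (induction u) (auto simp: chi_hom mult_ac)

lemma cw_app: "chi_word chi (u @ v) h = chi_word chi u h * chi_word chi v h"
  unfolding chi_word_def by simp

lemma cw_0: "chi_word chi u 0 = 1"
  unfolding chi_word_def by (induction u) (auto simp: chi0)

lemma cw_nil: "chi_word chi [] h = 1"
  unfolding chi_word_def by simp

abbreviation M (infixl "\<odot>" 70) where "a \<odot> b \<equiv> sga_mul chi a b"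

lemma mul_sum:
  assumes "finite S" "Poly_Mapping.keys a \<subseteq> S" "finite T" "Poly_Mapping.keys b \<subseteq> T"
  shows "a \<odot> b = (\<Sum>x\<in>S. \<Sum>y\<in>T. Poly_Mapping.single (fst x + fst y, snd x @ snd y)
          (Poly_Mapping.lookup a x * Poly_Mapping.lookup b y * chi_word chi (snd x) (fst y)))"
proof -
  have inner: "(\<Sum>y\<in>Poly_Mapping.keys b. Poly_Mapping.single (fst x + fst y, snd x @ snd y)
          (Poly_Mapping.lookup a x * Poly_Mapping.lookup b y * chi_word chi (snd x) (fst y)))
       = (\<Sum>y\<in>T. Poly_Mapping.single (fst x + fst y, snd x @ snd y)
          (Poly_Mapping.lookup a x * Poly_Mapping.lookup b y * chi_word chi (snd x) (fst y)))" for x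
    by (rule sum.mono_neutral_left) (use assms in \<open>auto simp: in_keys_iff\<close>)
  have "a \<odot> b = (\<Sum>x\<in>Poly_Mapping.keys a. \<Sum>y\<in>T. Poly_Mapping.single (fst x + fst y, snd x @ snd y)
          (Poly_Mapping.lookup a x * Poly_Mapping.lookup b y * chi_word chi (snd x) (fst y)))"
    unfolding sga_mul_def using inner by simp
  also have "(\<Sum>x\<in>Poly_Mapping.keys a. \<Sum>y\<in>T. Poly_Mapping.single (fst x + fst y, snd x @ snd y)
          (Poly_Mapping.lookup a x * Poly_Mapping.lookup b y * chi_word chi (snd x) (fst y)))
      = (\<Sum>x\<in>S. \<Sum>y\<in>T. Poly_Mapping.single (fst x + fst y, snd x @ snd y)
          (Poly_Mapping.lookup a x * Poly_Mapping.lookup b y * chi_word chi (snd x) (fst y)))"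
    by (rule sum.mono_neutral_left) (use assms in \<open>auto simp: in_keys_iff\<close>)
  finally show ?thesis .
qed


lemma mul_add_left: "(a + b) \<odot> c = a \<odot> c + b \<odot> c"
proof -
  let ?S = "Poly_Mapping.keys a \<union> Poly_Mapping.keys b \<union> Poly_Mapping.keys (a + b)"
  let ?T = "Poly_Mapping.keys c"
  have "(a + b) \<odot> c = (\<Sum>x\<in>?S. \<Sum>y\<in>?T. Poly_Mapping.single (fst x + fst y, snd x @ snd y)
          (Poly_Mapping.lookup (a + b) x * Poly_Mapping.lookup c y * chi_word chi (snd x) (fst y)))"
    by (rule mul_sum) auto
  also have "\<dots> = (\<Sum>x\<in>?S. \<Sum>y\<in>?T. Poly_Mapping.single (fst x + fst y, snd x @ snd y)
          (Poly_Mapping.lookup a x * Poly_Mapping.lookup c y * chi_word chi (snd x) (fst y)))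
     + (\<Sum>x\<in>?S. \<Sum>y\<in>?T. Poly_Mapping.single (fst x + fst y, snd x @ snd y)
          (Poly_Mapping.lookup b x * Poly_Mapping.lookup c y * chi_word chi (snd x) (fst y)))"
    by (simp add: lookup_add distrib_right single_add sum.distrib)
  also have "\<dots> = a \<odot> c + b \<odot> c"
    by (subst (1 2) mul_sum[where S = ?S and T = ?T]) auto
  finally show ?thesis .
qed

lemma mul_add_right: "c \<odot> (a + b) = c \<odot> a + c \<odot> b"
proof -
  let ?S = "Poly_Mapping.keys a \<union> Poly_Mapping.keys b \<union> Poly_Mapping.keys (a + b)"
  let ?T = "Poly_Mapping.keys c"
  have "c \<odot> (a + b) = (\<Sum>x\<in>?T. \<Sum>y\<in>?S. Poly_Mapping.single (fst x + fst y, snd x @ snd y)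
          (Poly_Mapping.lookup c x * Poly_Mapping.lookup (a + b) y * chi_word chi (snd x) (fst y)))"
    by (rule mul_sum) auto
  also have "\<dots> = (\<Sum>x\<in>?T. \<Sum>y\<in>?S. Poly_Mapping.single (fst x + fst y, snd x @ snd y)
          (Poly_Mapping.lookup c x * Poly_Mapping.lookup a y * chi_word chi (snd x) (fst y)))
     + (\<Sum>x\<in>?T. \<Sum>y\<in>?S. Poly_Mapping.single (fst x + fst y, snd x @ snd y)
          (Poly_Mapping.lookup c x * Poly_Mapping.lookup b y * chi_word chi (snd x) (fst y)))"
    by (simp add: lookup_add distrib_left distrib_right single_add sum.distrib)
  also have "\<dots> = c \<odot> a + c \<odot> b"
    by (subst (1 2) mul_sum[where S = ?T and T = ?S]) auto
  finally show ?thesis .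
qed

lemma mul_zero_left[simp]: "0 \<odot> a = 0"
  unfolding sga_mul_def by simp

lemma mul_zero_right[simp]: "a \<odot> 0 = 0"
  unfolding sga_mul_def by simp

lemma mul_neg_left: "(- a) \<odot> b = - (a \<odot> b)"
  using mul_add_left[of a "- a" b] by (simp add: eq_neg_iff_add_eq_0 add.commute)

lemma mul_neg_right: "b \<odot> (- a) = - (b \<odot> a)"
  using mul_add_right[of b a "- a"] by (simp add: eq_neg_iff_add_eq_0 add.commute)

lemma mul_diff_left: "(a - b) \<odot> c = a \<odot> c - b \<odot> c"
  using mul_add_left[of a "- b" c] by (simp add: mul_neg_left)

lemma mul_diff_right: "c \<odot> (a - b) = c \<odot> a - c \<odot> b"
  using mul_add_right[of c a "- b"] by (simp add: mul_neg_right)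

lemma mul_single: "Poly_Mapping.single x c \<odot> Poly_Mapping.single y d =
   Poly_Mapping.single (fst x + fst y, snd x @ snd y) (c * d * chi_word chi (snd x) (fst y))"
  by (subst mul_sum[where S = "{x}" and T = "{y}"]) auto

lemma mul_sum_left: "finite A \<Longrightarrow> (sum f A) \<odot> c = (\<Sum>i\<in>A. f i \<odot> c)"
  by (induction A rule: finite_induct) (auto simp: mul_add_left)

lemma mul_sum_right: "finite A \<Longrightarrow> c \<odot> (sum f A) = (\<Sum>i\<in>A. c \<odot> f i)"
  by (induction A rule: finite_induct) (auto simp: mul_add_right)

lemma expand: "a = (\<Sum>x\<in>Poly_Mapping.keys a. Poly_Mapping.single x (Poly_Mapping.lookup a x))"
proof (rule poly_mapping_eqI)
  fix k
  show "Poly_Mapping.lookup a k = Poly_Mapping.lookup (\<Sum>x\<in>Poly_Mapping.keys a. Poly_Mapping.single x (Poly_Mapping.lookup a x)) k"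
    by (simp add: lookup_sum lookup_single when_def in_keys_iff sum.If_cases)
qed

lemma assoc_single: "(Poly_Mapping.single x c \<odot> Poly_Mapping.single y d) \<odot> Poly_Mapping.single z e
   = Poly_Mapping.single x c \<odot> (Poly_Mapping.single y d \<odot> Poly_Mapping.single z e)"
  by (simp add: mul_single cw_app cw_add add.assoc mult_ac)

lemma sum3_rev: "(\<Sum>z\<in>C. \<Sum>y\<in>B. \<Sum>x\<in>A. f x y z) = (\<Sum>x\<in>A. \<Sum>y\<in>B. \<Sum>z\<in>C. f x y z)"
proof -
  have "(\<Sum>z\<in>C. \<Sum>y\<in>B. \<Sum>x\<in>A. f x y z) = (\<Sum>z\<in>C. \<Sum>x\<in>A. \<Sum>y\<in>B. f x y z)"
    by (rule sum.cong[OF refl], rule sum.swap)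
  also have "\<dots> = (\<Sum>x\<in>A. \<Sum>z\<in>C. \<Sum>y\<in>B. f x y z)"
    by (rule sum.swap)
  also have "\<dots> = (\<Sum>x\<in>A. \<Sum>y\<in>B. \<Sum>z\<in>C. f x y z)"
    by (rule sum.cong[OF refl], rule sum.swap)
  finally show ?thesis .
qed

lemma mul_assoc: "(a \<odot> b) \<odot> c = a \<odot> (b \<odot> c)"
proof -
  define s where "s = (\<lambda>(f::('g,'k) sga) x. Poly_Mapping.single x (Poly_Mapping.lookup f x))"
  have ea: "a = (\<Sum>x\<in>Poly_Mapping.keys a. s a x)" unfolding s_def by (rule expand)
  have eb: "b = (\<Sum>x\<in>Poly_Mapping.keys b. s b x)" unfolding s_def by (rule expand)
  have ec: "c = (\<Sum>x\<in>Poly_Mapping.keys c. s c x)" unfolding s_def by (rule expand)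
  define A where "A = Poly_Mapping.keys a"
  define B where "B = Poly_Mapping.keys b"
  define C where "C = Poly_Mapping.keys c"
  have fin: "finite A" "finite B" "finite C" unfolding A_def B_def C_def by auto
  have "(a \<odot> b) \<odot> c = (sum (s a) A \<odot> sum (s b) B) \<odot> sum (s c) C"
    unfolding A_def B_def C_def by (simp only: ea[symmetric] eb[symmetric] ec[symmetric])
  also have "\<dots> = (\<Sum>z\<in>C. \<Sum>y\<in>B. \<Sum>x\<in>A. (s a x \<odot> s b y) \<odot> s c z)"
    using fin by (simp add: mul_sum_left mul_sum_right)
  also have "\<dots> = (\<Sum>x\<in>A. \<Sum>y\<in>B. \<Sum>z\<in>C. (s a x \<odot> s b y) \<odot> s c z)"
    by (rule sum3_rev)
  also have "\<dots> = (\<Sum>x\<in>A. \<Sum>y\<in>B. \<Sum>z\<in>C. s a x \<odot> (s b y \<odot> s c z))"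
    unfolding s_def by (simp add: assoc_single)
  also have "\<dots> = (\<Sum>z\<in>C. \<Sum>y\<in>B. \<Sum>x\<in>A. s a x \<odot> (s b y \<odot> s c z))"
    by (rule sum3_rev)
  also have "\<dots> = sum (s a) A \<odot> (sum (s b) B \<odot> sum (s c) C)"
    using fin by (simp add: mul_sum_left mul_sum_right)
  also have "\<dots> = a \<odot> (b \<odot> c)"
    unfolding A_def B_def C_def by (simp only: ea[symmetric] eb[symmetric] ec[symmetric])
  finally show ?thesis .
qed


lemma const_central: "a \<odot> sga_const c = sga_const c \<odot> a"
proof -
  have "a \<odot> sga_const c = (\<Sum>x\<in>Poly_Mapping.keys a. Poly_Mapping.single x (Poly_Mapping.lookup a x) \<odot> sga_const c)"
    by (subst expand[of a]) (simp add: mul_sum_left)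
  also have "\<dots> = (\<Sum>x\<in>Poly_Mapping.keys a. sga_const c \<odot> Poly_Mapping.single x (Poly_Mapping.lookup a x))"
    by (rule sum.cong) (auto simp: sga_const_def mul_single cw_0 cw_nil mult.commute)
  also have "\<dots> = sga_const c \<odot> a"
    by (subst (2) expand[of a]) (simp add: mul_sum_right)
  finally show ?thesis .
qed

lemma const_one: "sga_const 1 \<odot> a = a"
proof -
  have "sga_const 1 \<odot> a = (\<Sum>x\<in>Poly_Mapping.keys a. sga_const 1 \<odot> Poly_Mapping.single x (Poly_Mapping.lookup a x))"
    by (subst expand[of a]) (simp add: mul_sum_right)
  also have "\<dots> = (\<Sum>x\<in>Poly_Mapping.keys a. Poly_Mapping.single x (Poly_Mapping.lookup a x))"
    by (rule sum.cong) (auto simp: sga_const_def mul_single cw_0 cw_nil)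
  also have "\<dots> = a" by (rule expand[symmetric])
  finally show ?thesis .
qed

lemma const_const: "sga_const c \<odot> sga_const d = sga_const (c * d)"
  by (simp add: sga_const_def mul_single cw_nil)

lemma const_add: "sga_const (c + d) = sga_const c + sga_const d"
  by (simp add: sga_const_def single_add)

lemma const_zero: "sga_const 0 = 0"
  by (simp add: sga_const_def)

definition sm :: "'k \<Rightarrow> ('g, 'k) sga \<Rightarrow> ('g, 'k) sga" where
  "sm c a = sga_const c \<odot> a"

lemma sm_mul_left: "sm c a \<odot> b = sm c (a \<odot> b)"
  unfolding sm_def by (simp add: mul_assoc)

lemma sm_mul_right: "a \<odot> sm c b = sm c (a \<odot> b)"
  unfolding sm_def by (simp add: mul_assoc[symmetric] const_central)

lemma sm_sm: "sm c (sm d a) = sm (c * d) a"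
  unfolding sm_def by (simp add: mul_assoc[symmetric] const_const)

lemma sm_one[simp]: "sm 1 a = a"
  unfolding sm_def by (simp add: const_one)

lemma sm_zero_scalar[simp]: "sm 0 a = 0"
  unfolding sm_def by (simp add: const_zero)

lemma sm_zero[simp]: "sm c 0 = 0"
  unfolding sm_def by simp

lemma sm_add_scalar: "sm (c + d) a = sm c a + sm d a"
  unfolding sm_def by (simp add: const_add mul_add_left)

lemma sm_add: "sm c (a + b) = sm c a + sm c b"
  unfolding sm_def by (simp add: mul_add_right)

lemma sm_diff: "sm c (a - b) = sm c a - sm c b"
  unfolding sm_def by (simp add: mul_diff_right)

lemma sm_neg: "sm c (- a) = - sm c a"
  unfolding sm_def by (simp add: mul_neg_right)

lemma sm_neg_scalar: "sm (- c) a = - sm c a"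
  using sm_add_scalar[of c "- c" a] by (simp add: eq_neg_iff_add_eq_0 add.commute)

lemma sm_diff_scalar: "sm (c - d) a = sm c a - sm d a"
  using sm_add_scalar[of c "- d" a] by (simp add: sm_neg_scalar)

abbreviation P where "P \<equiv> pw chi g"

lemma pw_app_left: "P (a @ b) c = P a c * P b c"
  unfolding pw_def by (simp add: cw_app)

lemma pw_app_right: "P a (b @ c) = P a b * P a c"
  unfolding pw_def g_word_def by (simp add: cw_add)

lemma pw_nil_left[simp]: "P [] c = 1"
  unfolding pw_def by (simp add: cw_nil)

lemma pw_nil_right[simp]: "P a [] = 1"
  unfolding pw_def g_word_def by (simp add: cw_0)

lemma pw_single: "P [i] [j] = chi i (g j)"
  unfolding pw_def g_word_def chi_word_def by simp

abbreviation Br where "Br \<equiv> sbr chi g"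

lemma br_def: "Br \<alpha> a \<beta> b = a \<odot> b - sm (P \<alpha> \<beta>) (b \<odot> a)"
  unfolding sbr_def sm_def by (simp add: mul_assoc)

lemmas ring_n = br_def mul_add_left mul_add_right mul_diff_left mul_diff_right mul_neg_left mul_neg_right
  mul_assoc sm_mul_left sm_mul_right sm_sm sm_add sm_diff sm_neg pw_app_left pw_app_right

lemma I1: "Br \<alpha> a (\<beta> @ \<gamma>) (b \<odot> c) = Br \<alpha> a \<beta> b \<odot> c + sm (P \<alpha> \<beta>) (b \<odot> Br \<alpha> a \<gamma> c)"
  by (simp add: ring_n algebra_simps)

lemma I2: "Br (\<alpha> @ \<beta>) (a \<odot> b) \<gamma> c = sm (P \<beta> \<gamma>) (Br \<alpha> a \<gamma> c \<odot> b) + a \<odot> Br \<beta> b \<gamma> c"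
  by (simp add: ring_n algebra_simps)

lemma J: "Br \<alpha> a (\<beta> @ \<gamma>) (Br \<beta> b \<gamma> c) = Br (\<alpha> @ \<beta>) (Br \<alpha> a \<beta> b) \<gamma> c
   + sm (P \<alpha> \<beta>) (b \<odot> Br \<alpha> a \<gamma> c) - sm (P \<beta> \<gamma>) (Br \<alpha> a \<gamma> c \<odot> b)"
  by (simp add: ring_n algebra_simps)

lemma Br_self: "Br \<alpha> a \<alpha> a = sm (1 - P \<alpha> \<alpha>) (a \<odot> a)"
  by (simp add: ring_n sm_diff_scalar)

lemma Br_swap: "Br \<beta> b \<alpha> a = sm (- P \<beta> \<alpha>) (Br \<alpha> a \<beta> b) + sm (1 - P \<alpha> \<beta> * P \<beta> \<alpha>) (b \<odot> a)"
  by (simp add: ring_n sm_diff_scalar sm_neg_scalar algebra_simps)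


lemma Br_lin_right: "Br \<alpha> a \<beta> (x - sm c y) = Br \<alpha> a \<beta> x - sm c (Br \<alpha> a \<beta> y)"
  by (simp add: ring_n algebra_simps mult.commute)

lemma Br_lin_left: "Br \<alpha> (x - sm c y) \<beta> b = Br \<alpha> x \<beta> b - sm c (Br \<alpha> y \<beta> b)"
  by (simp add: ring_n algebra_simps mult.commute)

lemma Br_diff_right: "Br \<alpha> a \<beta> (x - y) = Br \<alpha> a \<beta> x - Br \<alpha> a \<beta> y"
  by (simp add: ring_n algebra_simps)

lemma Br_diff_left: "Br \<alpha> (x - y) \<beta> b = Br \<alpha> x \<beta> b - Br \<alpha> y \<beta> b"
  by (simp add: ring_n algebra_simps)

lemma Br_sm_left: "Br \<alpha> (sm c x) \<beta> b = sm c (Br \<alpha> x \<beta> b)"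
  by (simp add: ring_n algebra_simps mult.commute)

lemma Br_sm_right: "Br \<alpha> a \<beta> (sm c x) = sm c (Br \<alpha> a \<beta> x)"
  by (simp add: ring_n algebra_simps mult.commute)

lemma pw_comm_right: "P a (b @ c) = P a (c @ b)"
  by (simp add: pw_app_right mult.commute)

lemma pw_comm_left: "P (b @ c) a = P (c @ b) a"
  by (simp add: pw_app_left mult.commute)

lemma Br_deg_right: "P \<alpha> \<beta> = P \<alpha> \<beta>' \<Longrightarrow> Br \<alpha> a \<beta> b = Br \<alpha> a \<beta>' b"
  by (simp add: br_def)

lemma Br_deg_left: "P \<alpha> \<beta> = P \<alpha>' \<beta> \<Longrightarrow> Br \<alpha> a \<beta> b = Br \<alpha>' a \<beta> b"
  by (simp add: br_def)

section \<open>Ideal\<close>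

abbreviation Z where "Z R a \<equiv> a \<in> sga_ideal chi R"

lemma Z_0: "Z R 0" by (rule sga_ideal.zero)
lemma Z_add: "Z R a \<Longrightarrow> Z R b \<Longrightarrow> Z R (a + b)" by (rule sga_ideal.add)
lemma Z_lmul: "Z R a \<Longrightarrow> Z R (c \<odot> a)" by (rule sga_ideal.lmul)
lemma Z_rmul: "Z R a \<Longrightarrow> Z R (a \<odot> c)" by (rule sga_ideal.rmul)
lemma Z_sm: "Z R a \<Longrightarrow> Z R (sm c a)" unfolding sm_def by (rule sga_ideal.lmul)
lemma Z_neg: "Z R a \<Longrightarrow> Z R (- a)" using Z_sm[where R=R and a=a and c="-1"] by (simp add: sm_neg_scalar)
lemma Z_diff: "Z R a \<Longrightarrow> Z R b \<Longrightarrow> Z R (a - b)" using Z_add[where R=R and a=a and b="- b"] Z_neg by simp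
lemma Z_br_left: "Z R a \<Longrightarrow> Z R (Br \<alpha> a \<beta> b)"
  unfolding br_def by (intro Z_diff Z_rmul Z_sm Z_lmul)
lemma Z_br_right: "Z R b \<Longrightarrow> Z R (Br \<alpha> a \<beta> b)"
  unfolding br_def by (intro Z_diff Z_rmul Z_sm Z_lmul)

definition eqv where "eqv R a b \<longleftrightarrow> Z R (a - b)"

lemma eqv_refl[simp]: "eqv R a a" unfolding eqv_def by (simp add: Z_0)
lemma eqv_sym: "eqv R a b \<Longrightarrow> eqv R b a" unfolding eqv_def using Z_neg by fastforce
lemma eqv_trans[trans]: "eqv R a b \<Longrightarrow> eqv R b c \<Longrightarrow> eqv R a c"
  unfolding eqv_def using Z_add by fastforce
lemma eqv_Z: "eqv R a b \<Longrightarrow> Z R b \<Longrightarrow> Z R a"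
  unfolding eqv_def using Z_add by fastforce
lemma Z_eqv: "Z R a \<Longrightarrow> eqv R a 0"
  unfolding eqv_def by simp
lemma eqv_add: "eqv R a b \<Longrightarrow> eqv R c d \<Longrightarrow> eqv R (a + c) (b + d)"
  unfolding eqv_def using Z_add by (fastforce simp: algebra_simps)
lemma eqv_diff: "eqv R a b \<Longrightarrow> eqv R c d \<Longrightarrow> eqv R (a - c) (b - d)"
  unfolding eqv_def using Z_diff by (fastforce simp: algebra_simps)
lemma eqv_sm: "eqv R a b \<Longrightarrow> eqv R (sm c a) (sm c b)"
  unfolding eqv_def using Z_sm by (fastforce simp: sm_diff[symmetric])
lemma eqv_lmul: "eqv R a b \<Longrightarrow> eqv R (c \<odot> a) (c \<odot> b)"
  unfolding eqv_def using Z_lmul by (fastforce simp: mul_diff_right[symmetric])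
lemma eqv_rmul: "eqv R a b \<Longrightarrow> eqv R (a \<odot> c) (b \<odot> c)"
  unfolding eqv_def using Z_rmul by (fastforce simp: mul_diff_left[symmetric])
lemma eqv_br_left: "eqv R a b \<Longrightarrow> eqv R (Br \<alpha> a \<beta> c) (Br \<alpha> b \<beta> c)"
  unfolding eqv_def using Z_br_left by (fastforce simp: Br_diff_left[symmetric])
lemma eqv_br_right: "eqv R a b \<Longrightarrow> eqv R (Br \<alpha> c \<beta> a) (Br \<alpha> c \<beta> b)"
  unfolding eqv_def using Z_br_right by (fastforce simp: Br_diff_right[symmetric])
lemma eqv_Z_diff: "Z R (a - b) \<Longrightarrow> eqv R a b" unfolding eqv_def .

section \<open>Skew commutation\<close>

definition SC where "SC R \<alpha> a \<beta> b \<longleftrightarrow> Z R (Br \<alpha> a \<beta> b)"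

lemma SC_mul_right: "SC R \<alpha> a \<beta> b \<Longrightarrow> SC R \<alpha> a \<gamma> c \<Longrightarrow> SC R \<alpha> a (\<beta> @ \<gamma>) (b \<odot> c)"
  unfolding SC_def I1 by (intro Z_add Z_rmul Z_sm Z_lmul)

lemma SC_mul_left: "SC R \<alpha> a \<gamma> c \<Longrightarrow> SC R \<beta> b \<gamma> c \<Longrightarrow> SC R (\<alpha> @ \<beta>) (a \<odot> b) \<gamma> c"
  unfolding SC_def I2 by (intro Z_add Z_rmul Z_sm Z_lmul)

lemma SC_br_right: "SC R \<alpha> a \<beta> b \<Longrightarrow> SC R \<alpha> a \<gamma> c \<Longrightarrow> SC R \<alpha> a (\<beta> @ \<gamma>) (Br \<beta> b \<gamma> c)"
proof -
  assume h: "SC R \<alpha> a \<beta> b" "SC R \<alpha> a \<gamma> c"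
  have 1: "Z R (Br \<alpha> a (\<beta> @ \<gamma>) (b \<odot> c))" using SC_mul_right[OF h] unfolding SC_def .
  have "Z R (Br \<alpha> a (\<gamma> @ \<beta>) (c \<odot> b))" using SC_mul_right[OF h(2) h(1)] unfolding SC_def .
  hence 2: "Z R (Br \<alpha> a (\<beta> @ \<gamma>) (c \<odot> b))" using Br_deg_right[OF pw_comm_right] by metis
  have "Br \<alpha> a (\<beta> @ \<gamma>) (Br \<beta> b \<gamma> c) = Br \<alpha> a (\<beta> @ \<gamma>) (b \<odot> c) - sm (P \<beta> \<gamma>) (Br \<alpha> a (\<beta> @ \<gamma>) (c \<odot> b))"
    by (simp only: br_def[of \<beta> b] Br_lin_right)
  then show ?thesis unfolding SC_def using 1 2 by (simp add: Z_diff Z_sm)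
qed

lemma SC_br_left: "SC R \<alpha> a \<gamma> c \<Longrightarrow> SC R \<beta> b \<gamma> c \<Longrightarrow> SC R (\<alpha> @ \<beta>) (Br \<alpha> a \<beta> b) \<gamma> c"
proof -
  assume h: "SC R \<alpha> a \<gamma> c" "SC R \<beta> b \<gamma> c"
  have 1: "Z R (Br (\<alpha> @ \<beta>) (a \<odot> b) \<gamma> c)" using SC_mul_left[OF h] unfolding SC_def .
  have "Z R (Br (\<beta> @ \<alpha>) (b \<odot> a) \<gamma> c)" using SC_mul_left[OF h(2) h(1)] unfolding SC_def .
  hence 2: "Z R (Br (\<alpha> @ \<beta>) (b \<odot> a) \<gamma> c)" using Br_deg_left[OF pw_comm_left] by metis
  have "Br (\<alpha> @ \<beta>) (Br \<alpha> a \<beta> b) \<gamma> c = Br (\<alpha> @ \<beta>) (a \<odot> b) \<gamma> c - sm (P \<alpha> \<beta>) (Br (\<alpha> @ \<beta>) (b \<odot> a) \<gamma> c)"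
    by (simp only: br_def[of \<alpha> a] Br_lin_left)
  then show ?thesis unfolding SC_def using 1 2 by (simp add: Z_diff Z_sm)
qed

lemma SC_sym: "P \<alpha> \<beta> * P \<beta> \<alpha> = 1 \<Longrightarrow> SC R \<alpha> a \<beta> b \<Longrightarrow> SC R \<beta> b \<alpha> a"
  unfolding SC_def by (subst Br_swap) (simp add: Z_sm)

lemma Jred: "SC R \<alpha> a \<gamma> c \<Longrightarrow> eqv R (Br \<alpha> a (\<beta> @ \<gamma>) (Br \<beta> b \<gamma> c)) (Br (\<alpha> @ \<beta>) (Br \<alpha> a \<beta> b) \<gamma> c)"
  unfolding eqv_def SC_def by (subst J) (simp add: Z_sm Z_diff Z_lmul Z_rmul)


lemma eqv_of_eq: "a = b \<Longrightarrow> eqv R a b" by simp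

lemma eqv_Z_split: "x = l + r \<Longrightarrow> Z R l \<Longrightarrow> eqv R x r"
  unfolding eqv_def by simp

lemma T2:
  assumes qn1: "q \<noteq> -1" and q0: "q \<noteq> 0"
    and pbb: "P \<beta> \<beta> = q" and qbc: "P \<beta> \<gamma> * P \<gamma> \<beta> = inverse q"
    and r2: "Z R (Br (\<alpha> @ \<beta>) (Br \<alpha> a \<beta> b) \<beta> b)"
    and r3: "Z R (Br \<beta> b (\<beta> @ \<gamma>) (Br \<beta> b \<gamma> c))"
    and r5: "SC R \<alpha> a \<gamma> c"
  shows "Z R (Br (\<alpha> @ \<beta> @ \<gamma>) (Br \<alpha> a (\<beta> @ \<gamma>) (Br \<beta> b \<gamma> c)) \<beta> b)"
proof -
  define D where "D = Br \<alpha> a \<beta> b"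
  define Y where "Y = Br \<beta> b \<gamma> c"
  define E where "E = Br \<alpha> a (\<beta> @ \<gamma>) Y"
  define E' where "E' = Br (\<alpha> @ \<beta>) D \<gamma> c"
  have s1: "eqv R E' E" unfolding E_def E'_def D_def Y_def by (rule eqv_sym, rule Jred[OF r5])
  have "eqv R (Br (\<alpha> @ \<beta>) D (\<beta> @ \<gamma>) Y) (sm (P (\<alpha> @ \<beta>) \<beta>) (b \<odot> E') - sm (P \<beta> \<gamma>) (E' \<odot> b))"
  proof (rule eqv_Z_split)
    show "Br (\<alpha> @ \<beta>) D (\<beta> @ \<gamma>) Y = Br ((\<alpha> @ \<beta>) @ \<beta>) (Br (\<alpha> @ \<beta>) D \<beta> b) \<gamma> c +
      (sm (P (\<alpha> @ \<beta>) \<beta>) (b \<odot> E') - sm (P \<beta> \<gamma>) (E' \<odot> b))"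
      unfolding Y_def E'_def by (subst J) simp
    show "Z R (Br ((\<alpha> @ \<beta>) @ \<beta>) (Br (\<alpha> @ \<beta>) D \<beta> b) \<gamma> c)"
      using r2 unfolding D_def by (rule Z_br_left)
  qed
  also have "eqv R \<dots> (sm (P (\<alpha> @ \<beta>) \<beta>) (b \<odot> E) - sm (P \<beta> \<gamma>) (E \<odot> b))"
    using s1 by (intro eqv_diff eqv_sm eqv_lmul eqv_rmul)
  finally have eq2: "eqv R (Br (\<alpha> @ \<beta>) D (\<beta> @ \<gamma>) Y) (sm (P (\<alpha> @ \<beta>) \<beta>) (b \<odot> E) - sm (P \<beta> \<gamma>) (E \<odot> b))" .
  have eq3: "eqv R (Br (\<alpha> @ \<beta>) D (\<beta> @ \<gamma>) Y) (sm (P \<beta> (\<beta> @ \<gamma>)) (E \<odot> b) - sm (P \<alpha> \<beta>) (b \<odot> E))"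
  proof -
    have j: "Br \<alpha> a (\<beta> @ \<beta> @ \<gamma>) (Br \<beta> b (\<beta> @ \<gamma>) Y) = Br (\<alpha> @ \<beta>) D (\<beta> @ \<gamma>) Y
      + sm (P \<alpha> \<beta>) (b \<odot> E) - sm (P \<beta> (\<beta> @ \<gamma>)) (E \<odot> b)"
      unfolding D_def E_def by (rule J)
    have z: "Z R (Br \<alpha> a (\<beta> @ \<beta> @ \<gamma>) (Br \<beta> b (\<beta> @ \<gamma>) Y))"
      using r3 unfolding Y_def by (rule Z_br_right)
    have "Br (\<alpha> @ \<beta>) D (\<beta> @ \<gamma>) Y = Br \<alpha> a (\<beta> @ \<beta> @ \<gamma>) (Br \<beta> b (\<beta> @ \<gamma>) Y) +
       (sm (P \<beta> (\<beta> @ \<gamma>)) (E \<odot> b) - sm (P \<alpha> \<beta>) (b \<odot> E))"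
      using j by (simp add: algebra_simps)
    then show ?thesis using z by (rule eqv_Z_split)
  qed
  define W where "W = (sm (P (\<alpha> @ \<beta>) \<beta>) (b \<odot> E) - sm (P \<beta> \<gamma>) (E \<odot> b)) -
      (sm (P \<beta> (\<beta> @ \<gamma>)) (E \<odot> b) - sm (P \<alpha> \<beta>) (b \<odot> E))"
  have ZW: "Z R W" using eqv_trans[OF eqv_sym[OF eq2] eq3] unfolding W_def eqv_def .
  have W_eq: "W = sm (P (\<alpha> @ \<beta>) \<beta> + P \<alpha> \<beta>) (b \<odot> E) - sm (P \<beta> \<gamma> + P \<beta> (\<beta> @ \<gamma>)) (E \<odot> b)"
    unfolding W_def by (simp add: sm_add_scalar algebra_simps)
  define \<kappa> where "\<kappa> = - inverse (P \<beta> \<gamma> + P \<beta> (\<beta> @ \<gamma>))"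
  have pbc: "P \<beta> \<gamma> \<noteq> 0" using qbc q0 by auto
  have q1: "1 + q \<noteq> 0" using qn1 by (metis add.commute add_eq_0_iff)
  have den: "P \<beta> \<gamma> + P \<beta> (\<beta> @ \<gamma>) = (1 + q) * P \<beta> \<gamma>"
    by (simp add: pw_app_right pbb algebra_simps)
  have nz: "P \<beta> \<gamma> + q * P \<beta> \<gamma> \<noteq> 0" using q1 pbc by (metis distrib_right mult_1 mult_eq_0_iff)
  have c1: "\<kappa> * (P (\<alpha> @ \<beta>) \<beta> + P \<alpha> \<beta>) = - P (\<alpha> @ \<beta> @ \<gamma>) \<beta>"
  proof -
    have "P \<gamma> \<beta> = (P \<beta> \<gamma> * P \<gamma> \<beta>) / P \<beta> \<gamma>" using pbc by simp
    hence pcb: "P \<gamma> \<beta> = inverse q * inverse (P \<beta> \<gamma>)" using qbc by (simp add: divide_inverse)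
    show ?thesis unfolding \<kappa>_def den using q1 pbc q0 nz
      by (simp add: pw_app_left pbb pcb field_simps)
  qed
  have c2: "\<kappa> * (P \<beta> \<gamma> + P \<beta> (\<beta> @ \<gamma>)) = - 1"
    unfolding \<kappa>_def den using q1 pbc nz by (simp add: field_simps)
  have eqf: "sm \<kappa> W = Br (\<alpha> @ \<beta> @ \<gamma>) E \<beta> b"
    unfolding W_eq br_def by (simp add: sm_diff sm_sm c1 c2 sm_neg_scalar)
  have "Z R (sm \<kappa> W)" by (rule Z_sm[OF ZW])
  then show ?thesis unfolding eqf E_def Y_def .
qed


lemma cw_nz: "chi_word chi u h \<noteq> 0"
  unfolding chi_word_def by (induction u) (auto simp: chi_nz)

lemma pw_nz: "P \<alpha> \<beta> \<noteq> 0"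
  unfolding pw_def by (rule cw_nz)

lemma eqv_Br_Z: "Z R (Br \<alpha> a \<beta> b) \<Longrightarrow> eqv R (a \<odot> b) (sm (P \<alpha> \<beta>) (b \<odot> a))"
  unfolding eqv_def br_def .

lemma DY_lemma:
  assumes r2: "Z R (Br (\<alpha> @ \<beta>) (Br \<alpha> a \<beta> b) \<beta> b)"
    and r5: "SC R \<alpha> a \<gamma> c"
  shows "eqv R (Br (\<alpha> @ \<beta>) (Br \<alpha> a \<beta> b) (\<beta> @ \<gamma>) (Br \<beta> b \<gamma> c))
     (sm (P (\<alpha> @ \<beta>) \<beta>) (b \<odot> Br \<alpha> a (\<beta> @ \<gamma>) (Br \<beta> b \<gamma> c)) - sm (P \<beta> \<gamma>) (Br \<alpha> a (\<beta> @ \<gamma>) (Br \<beta> b \<gamma> c) \<odot> b))"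
proof -
  define D where "D = Br \<alpha> a \<beta> b"
  define Y where "Y = Br \<beta> b \<gamma> c"
  define E where "E = Br \<alpha> a (\<beta> @ \<gamma>) Y"
  define E' where "E' = Br (\<alpha> @ \<beta>) D \<gamma> c"
  have s1: "eqv R E' E" unfolding E_def E'_def D_def Y_def by (rule eqv_sym, rule Jred[OF r5])
  have "eqv R (Br (\<alpha> @ \<beta>) D (\<beta> @ \<gamma>) Y) (sm (P (\<alpha> @ \<beta>) \<beta>) (b \<odot> E') - sm (P \<beta> \<gamma>) (E' \<odot> b))"
  proof (rule eqv_Z_split)
    show "Br (\<alpha> @ \<beta>) D (\<beta> @ \<gamma>) Y = Br ((\<alpha> @ \<beta>) @ \<beta>) (Br (\<alpha> @ \<beta>) D \<beta> b) \<gamma> c +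
      (sm (P (\<alpha> @ \<beta>) \<beta>) (b \<odot> E') - sm (P \<beta> \<gamma>) (E' \<odot> b))"
      unfolding Y_def E'_def by (subst J) simp
    show "Z R (Br ((\<alpha> @ \<beta>) @ \<beta>) (Br (\<alpha> @ \<beta>) D \<beta> b) \<gamma> c)"
      using r2 unfolding D_def by (rule Z_br_left)
  qed
  also have "eqv R \<dots> (sm (P (\<alpha> @ \<beta>) \<beta>) (b \<odot> E) - sm (P \<beta> \<gamma>) (E \<odot> b))"
    using s1 by (intro eqv_diff eqv_sm eqv_lmul eqv_rmul)
  finally show ?thesis unfolding D_def Y_def E_def .
qed

lemma T1:
  assumes qn1: "q \<noteq> -1" and q0: "q \<noteq> 0"
    and paa: "P \<alpha> \<alpha> = q" and qab: "P \<alpha> \<beta> * P \<beta> \<alpha> = inverse q"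
    and pbb: "P \<beta> \<beta> = q" and qbc: "P \<beta> \<gamma> * P \<gamma> \<beta> = inverse q"
    and r1: "Z R (Br \<alpha> a (\<alpha> @ \<beta>) (Br \<alpha> a \<beta> b))"
    and r2: "Z R (Br (\<alpha> @ \<beta>) (Br \<alpha> a \<beta> b) \<beta> b)"
    and r3: "Z R (Br \<beta> b (\<beta> @ \<gamma>) (Br \<beta> b \<gamma> c))"
    and r5: "SC R \<alpha> a \<gamma> c"
  shows "Z R (Br (\<alpha> @ \<beta>) (Br \<alpha> a \<beta> b) (\<alpha> @ \<beta> @ \<gamma>) (Br \<alpha> a (\<beta> @ \<gamma>) (Br \<beta> b \<gamma> c)))"
proof -
  define D where "D = Br \<alpha> a \<beta> b"
  define Y where "Y = Br \<beta> b \<gamma> c"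
  define E where "E = Br \<alpha> a (\<beta> @ \<gamma>) Y"
  define E' where "E' = Br (\<alpha> @ \<beta>) D \<gamma> c"
  define DY where "DY = Br (\<alpha> @ \<beta>) D (\<beta> @ \<gamma>) Y"
  have s1: "eqv R E E'" unfolding E_def E'_def D_def Y_def by (rule Jred[OF r5])
  have f2: "eqv R (E \<odot> b) (sm (P (\<alpha> @ \<beta> @ \<gamma>) \<beta>) (b \<odot> E))"
    unfolding E_def Y_def by (rule eqv_Br_Z, rule T2[OF qn1 q0 pbb qbc r2 r3 r5])
  have "eqv R (Br \<alpha> a (\<alpha> @ \<beta> @ \<gamma>) E) (Br \<alpha> a ((\<alpha> @ \<beta>) @ \<gamma>) E')"
    using s1 by (simp add: eqv_br_right)
  also have "eqv R \<dots> (Br (\<alpha> @ (\<alpha> @ \<beta>)) (Br \<alpha> a (\<alpha> @ \<beta>) D) \<gamma> c)"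
    unfolding E'_def by (rule Jred[OF r5])
  finally have "eqv R (Br \<alpha> a (\<alpha> @ \<beta> @ \<gamma>) E) (Br (\<alpha> @ (\<alpha> @ \<beta>)) (Br \<alpha> a (\<alpha> @ \<beta>) D) \<gamma> c)" .
  hence "Z R (Br \<alpha> a (\<alpha> @ \<beta> @ \<gamma>) E)"
    by (rule eqv_Z) (use r1 in \<open>simp add: D_def Z_br_left\<close>)
  hence f3a: "eqv R (a \<odot> E) (sm (P \<alpha> (\<alpha> @ \<beta> @ \<gamma>)) (E \<odot> a))" by (rule eqv_Br_Z)
  define iP where "iP = inverse (P \<alpha> (\<alpha> @ \<beta> @ \<gamma>))"
  have f3: "eqv R (E \<odot> a) (sm iP (a \<odot> E))"
  proof -
    have "eqv R (sm iP (a \<odot> E)) (sm iP (sm (P \<alpha> (\<alpha> @ \<beta> @ \<gamma>)) (E \<odot> a)))"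
      by (rule eqv_sm[OF f3a])
    also have "sm iP (sm (P \<alpha> (\<alpha> @ \<beta> @ \<gamma>)) (E \<odot> a)) = E \<odot> a"
      unfolding iP_def by (simp add: sm_sm pw_nz)
    finally show ?thesis by (rule eqv_sym)
  qed
  have f4: "eqv R (Br (\<alpha> @ \<beta>) D \<alpha> a) (sm (1 - q) (D \<odot> a))"
  proof (rule eqv_Z_split)
    have cf: "P \<alpha> (\<alpha> @ \<beta>) * P (\<alpha> @ \<beta>) \<alpha> = q"
    proof -
      have "P \<alpha> (\<alpha> @ \<beta>) * P (\<alpha> @ \<beta>) \<alpha> = (P \<alpha> \<alpha> * P \<alpha> \<alpha>) * (P \<alpha> \<beta> * P \<beta> \<alpha>)"
        by (simp add: pw_app_left pw_app_right mult_ac)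
      also have "\<dots> = q" using q0 by (simp add: paa qab power2_eq_square field_simps)
      finally show ?thesis .
    qed
    show "Br (\<alpha> @ \<beta>) D \<alpha> a = sm (- P (\<alpha> @ \<beta>) \<alpha>) (Br \<alpha> a (\<alpha> @ \<beta>) D) + sm (1 - q) (D \<odot> a)"
      by (subst Br_swap) (simp add: cf)
    show "Z R (sm (- P (\<alpha> @ \<beta>) \<alpha>) (Br \<alpha> a (\<alpha> @ \<beta>) D))" using r1 unfolding D_def by (rule Z_sm)
  qed
  define k1 where "k1 = (q - 1) * P \<alpha> \<beta>"
  have f5: "eqv R DY (sm k1 (b \<odot> E))"
  proof -
    have "eqv R DY (sm (P (\<alpha> @ \<beta>) \<beta>) (b \<odot> E) - sm (P \<beta> \<gamma>) (E \<odot> b))"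
      unfolding DY_def D_def Y_def E_def by (rule DY_lemma[OF r2 r5])
    also have "eqv R \<dots> (sm (P (\<alpha> @ \<beta>) \<beta>) (b \<odot> E) - sm (P \<beta> \<gamma>) (sm (P (\<alpha> @ \<beta> @ \<gamma>) \<beta>) (b \<odot> E)))"
      using f2 by (intro eqv_diff eqv_sm) simp_all
    also have "\<dots> = sm (P (\<alpha> @ \<beta>) \<beta> - P \<beta> \<gamma> * P (\<alpha> @ \<beta> @ \<gamma>) \<beta>) (b \<odot> E)"
      by (simp add: sm_sm sm_diff_scalar)
    also have "P (\<alpha> @ \<beta>) \<beta> - P \<beta> \<gamma> * P (\<alpha> @ \<beta> @ \<gamma>) \<beta> = k1"
    proof -
      have "P (\<alpha> @ \<beta> @ \<gamma>) \<beta> = P \<alpha> \<beta> * q * P \<gamma> \<beta>" by (simp add: pw_app_left pbb)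
      moreover have "P \<beta> \<gamma> * (P \<alpha> \<beta> * q * P \<gamma> \<beta>) = P \<alpha> \<beta>"
        using q0 by (simp add: mult_ac qbc[simplified mult.commute] field_simps)
      ultimately show ?thesis unfolding k1_def by (simp add: pw_app_left pbb algebra_simps)
    qed
    finally show ?thesis .
  qed
  define PaY where "PaY = P \<alpha> (\<beta> @ \<gamma>)"
  define PDa where "PDa = P (\<alpha> @ \<beta>) \<alpha>"
  have "Br (\<alpha> @ \<beta>) D (\<alpha> @ \<beta> @ \<gamma>) E = Br ((\<alpha> @ \<beta>) @ \<alpha>) (Br (\<alpha> @ \<beta>) D \<alpha> a) (\<beta> @ \<gamma>) Y
      + sm PDa (a \<odot> DY) - sm PaY (DY \<odot> a)"
    unfolding E_def DY_def PDa_def PaY_def by (rule J)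
  also have "eqv R \<dots> (Br ((\<alpha> @ \<beta>) @ \<alpha>) (sm (1 - q) (D \<odot> a)) (\<beta> @ \<gamma>) Y
      + sm PDa (a \<odot> DY) - sm PaY (DY \<odot> a))"
    by (intro eqv_diff eqv_add eqv_br_left f4) simp_all
  also have "Br ((\<alpha> @ \<beta>) @ \<alpha>) (sm (1 - q) (D \<odot> a)) (\<beta> @ \<gamma>) Y = sm (1 - q) (sm PaY (DY \<odot> a) + D \<odot> E)"
    unfolding Br_sm_left DY_def PaY_def E_def by (subst I2) simp
  also have "eqv R (sm (1 - q) (sm PaY (DY \<odot> a) + D \<odot> E) + sm PDa (a \<odot> DY) - sm PaY (DY \<odot> a))
     (sm (1 - q) (sm PaY (sm k1 (b \<odot> E) \<odot> a) + D \<odot> E) + sm PDa (a \<odot> sm k1 (b \<odot> E)) - sm PaY (sm k1 (b \<odot> E) \<odot> a))"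
    using f5 by (intro eqv_diff eqv_add eqv_sm eqv_lmul eqv_rmul) simp_all
  also have "\<dots> = sm (- (q * PaY * k1)) (b \<odot> (E \<odot> a)) + sm (1 - q) (D \<odot> E) + sm (PDa * k1) (a \<odot> (b \<odot> E))"
    by (simp add: ring_n sm_add_scalar sm_diff_scalar sm_neg_scalar algebra_simps)
  also have "eqv R \<dots> (sm (- (q * PaY * k1)) (b \<odot> sm iP (a \<odot> E)) + sm (1 - q) (D \<odot> E) + sm (PDa * k1) (a \<odot> (b \<odot> E)))"
    using f3 by (intro eqv_add eqv_sm eqv_lmul) simp_all
  also have "\<dots> = sm ((1 - q) + PDa * k1) (a \<odot> (b \<odot> E)) + sm (- (q * PaY * k1) * iP - (1 - q) * P \<alpha> \<beta>) (b \<odot> (a \<odot> E))"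
    unfolding D_def by (simp add: ring_n sm_add_scalar sm_diff_scalar sm_neg_scalar algebra_simps)
  also have "(1 - q) + PDa * k1 = 0"
  proof -
    have "PDa = q * P \<beta> \<alpha>" unfolding PDa_def by (simp add: pw_app_left paa mult.commute)
    then show ?thesis unfolding k1_def using q0 qab
      by (simp add: field_simps)
  qed
  also have "- (q * PaY * k1) * iP - (1 - q) * P \<alpha> \<beta> = 0"
  proof -
    have "iP = inverse (q * PaY)" unfolding iP_def PaY_def by (simp add: pw_app_right paa)
    moreover have "PaY \<noteq> 0" unfolding PaY_def by (rule pw_nz)
    ultimately have h: "PaY * (iP * q) = 1" using q0 by (simp add: field_simps)
    have hx: "PaY * (iP * (q * x)) = x" for x
    proof -
      have "PaY * (iP * (q * x)) = (PaY * (iP * q)) * x" by (simp add: mult_ac)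
      then show ?thesis using h by simp
    qed
    show ?thesis unfolding k1_def by (simp add: algebra_simps hx)
  qed
  finally have "eqv R (Br (\<alpha> @ \<beta>) D (\<alpha> @ \<beta> @ \<gamma>) E) 0" by simp
  then show ?thesis unfolding eqv_def D_def E_def Y_def by simp
qed

end



context spctx begin

definition Q where "Q a b = P a b * P b a"

lemma Q_app_left: "Q (a @ b) c = Q a c * Q b c"
  unfolding Q_def by (simp add: pw_app_left pw_app_right mult_ac)

lemma Q_app_right: "Q a (b @ c) = Q a b * Q a c"
  unfolding Q_def by (simp add: pw_app_left pw_app_right mult_ac)

lemma Q_comm: "Q a b = Q b a"
  unfolding Q_def by (simp add: mult.commute)

lemma Q_far_gen: "(\<And>i j. i \<in> set a \<Longrightarrow> j \<in> set b \<Longrightarrow> Q [i] [j] = 1) \<Longrightarrow> Q a b = 1"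
proof (induction a)
  case Nil then show ?case by (simp add: Q_def)
next
  case (Cons x a)
  have "Q [x] b = 1" using Cons.prems
  proof (induction b)
    case Nil then show ?case by (simp add: Q_def)
  next
    case (Cons y b)
    have "Q [x] (y # b) = Q [x] [y] * Q [x] b" using Q_app_right[of "[x]" "[y]" b] by simp
    then show ?case using Cons by simp
  qed
  moreover have "Q (x # a) b = Q [x] b * Q a b" using Q_app_left[of "[x]" a b] by simp
  ultimately show ?case using Cons by simp
qed

end

locale sp = spctx chi g for chi :: "nat \<Rightarrow> 'g::ab_group_add \<Rightarrow> 'k::field" and g +
  fixes n :: nat and q :: 'k
  assumes n2: "n \<ge> 2" and q0: "q \<noteq> 0" and qm1: "q \<noteq> -1"
    and p_ii: "\<And>i. 1 \<le> i \<Longrightarrow> i < n \<Longrightarrow> chi i (g i) = q"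
    and p_adj: "\<And>i. 1 < i \<Longrightarrow> i < n \<Longrightarrow> chi i (g (i - 1)) * chi (i - 1) (g i) = inverse q"
    and p_far: "\<And>i j. 1 \<le> i \<Longrightarrow> i + 1 < j \<Longrightarrow> j \<le> n \<Longrightarrow> chi i (g j) * chi j (g i) = 1"
begin

abbreviation RR where "RR \<equiv> sp_rels n chi g"
abbreviation X where "X \<equiv> sga_X"
abbreviation I where "I k m \<equiv> [k..<Suc m]"

lemma Q_letter: "Q [i] [j] = chi i (g j) * chi j (g i)"
  unfolding Q_def by (simp add: pw_single)

lemma P_letter: "1 \<le> i \<Longrightarrow> i < n \<Longrightarrow> P [i] [i] = q"
  by (simp add: pw_single p_ii)

lemma Q_letter_far: "1 \<le> i \<Longrightarrow> 1 \<le> j \<Longrightarrow> i < n \<Longrightarrow> j < n \<Longrightarrow> Suc i < j \<or> Suc j < i \<Longrightarrow> Q [i] [j] = 1"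
  using p_far[of i j] p_far[of j i] by (auto simp: Q_letter mult.commute)

lemma Q_letter_adj: "1 \<le> i \<Longrightarrow> Suc i < n \<Longrightarrow> Q [i] [Suc i] = inverse q"
  using p_adj[of "Suc i"] by (simp add: Q_letter mult.commute)

lemma Q_I_far: "1 \<le> k \<Longrightarrow> 1 \<le> s \<Longrightarrow> t < n \<Longrightarrow> Suc m < s \<Longrightarrow> Q (I k m) (I s t) = 1"
  by (rule Q_far_gen) (auto intro!: Q_letter_far)

lemma Q_I_adj: "1 \<le> k \<Longrightarrow> k \<le> m \<Longrightarrow> Suc m < n \<Longrightarrow> Q (I k m) [Suc m] = inverse q"
proof -
  assume h: "1 \<le> k" "k \<le> m" "Suc m < n"
  have sp: "I k m = [k..<m] @ [m]" using h by (simp add: upt_Suc)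
  have "Q [k..<m] [Suc m] = 1" by (rule Q_far_gen) (use h in \<open>auto intro!: Q_letter_far\<close>)
  moreover have "Q [m] [Suc m] = inverse q" using h by (intro Q_letter_adj) auto
  ultimately show ?thesis unfolding sp Q_app_left by simp
qed

lemma P_I_self: "1 \<le> k \<Longrightarrow> k \<le> m \<Longrightarrow> m < n \<Longrightarrow> P (I k m) (I k m) = q"
proof (induction m)
  case 0 then show ?case by simp
next
  case (Suc m)
  show ?case
  proof (cases "k = Suc m")
    case True then show ?thesis using Suc.prems by (simp add: P_letter upt_Suc)
  next
    case False
    hence km: "k \<le> m" using Suc.prems by simp
    have e: "I k (Suc m) = I k m @ [Suc m]" using km by (simp add: upt_Suc)
    have "P (I k m @ [Suc m]) (I k m @ [Suc m]) = P (I k m) (I k m) * Q (I k m) [Suc m] * P [Suc m] [Suc m]"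
      unfolding Q_def by (simp add: pw_app_left pw_app_right mult_ac)
    also have "\<dots> = q * inverse q * q" using Suc km
      by (simp add: Q_I_adj P_letter)
    also have "\<dots> = q" using q0 by simp
    finally show ?thesis unfolding e .
  qed
qed


function U :: "nat \<Rightarrow> nat \<Rightarrow> ('g, 'k) sga" where
  "U k m = (if k < m then Br [k] (X k) (I (Suc k) m) (U (Suc k) m) else X k)"
  by pat_completeness auto
termination by (relation "measure (\<lambda>(k, m). m - k)") auto

declare U.simps[simp del]

lemma U_eq: "k < m \<Longrightarrow> U k m = Br [k] (X k) (I (Suc k) m) (U (Suc k) m)"
  by (subst U.simps) simp

lemma U_same: "U k k = X k"
  by (subst U.simps) simp

lemma I_cons: "k \<le> m \<Longrightarrow> [k] @ I (Suc k) m = I k m"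
  by (simp add: upt_conv_Cons)

lemma I_same: "I k k = [k]" by (simp add: upt_Suc)

lemma R1: "1 \<le> i \<Longrightarrow> Suc i < n \<Longrightarrow> Z RR (Br [i] (X i) [i, Suc i] (Br [i] (X i) [Suc i] (X (Suc i))))"
  unfolding sp_rels_def
  apply (rule sga_ideal.gen)
  apply (rule UnI1)+
  apply (rule CollectI)
  apply (rule exI[of _ i])
  apply simp
  done

lemma R2: "1 \<le> i \<Longrightarrow> Suc i < n \<Longrightarrow> Z RR (Br [i, Suc i] (Br [i] (X i) [Suc i] (X (Suc i))) [Suc i] (X (Suc i)))"
  unfolding sp_rels_def
  apply (rule sga_ideal.gen)
  apply (rule UnI1, rule UnI1, rule UnI1, rule UnI2)
  apply (rule CollectI)
  apply (rule exI[of _ i])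
  apply simp
  done

lemma R3: "1 \<le> i \<Longrightarrow> Suc i < j \<Longrightarrow> j \<le> n \<Longrightarrow> SC RR [i] (X i) [j] (X j)"
  unfolding sp_rels_def SC_def
  apply (rule sga_ideal.gen)
  apply (rule UnI1, rule UnI1, rule UnI2)
  apply (rule CollectI)
  apply (rule exI[of _ i], rule exI[of _ j])
  apply simp
  done

lemma SC_letters: "1 \<le> i \<Longrightarrow> 1 \<le> j \<Longrightarrow> i < n \<Longrightarrow> j < n \<Longrightarrow> Suc i < j \<or> Suc j < i \<Longrightarrow> SC RR [i] (X i) [j] (X j)"
proof -
  assume h: "1 \<le> i" "1 \<le> j" "i < n" "j < n" "Suc i < j \<or> Suc j < i"
  show ?thesis
  proof (cases "Suc i < j")
    case True then show ?thesis using h by (intro R3) auto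
  next
    case False
    hence sc: "SC RR [j] (X j) [i] (X i)" using h by (intro R3) auto
    have "P [j] [i] * P [i] [j] = 1" using Q_letter_far[of j i] h False unfolding Q_def by auto
    then show ?thesis using sc by (rule SC_sym)
  qed
qed

lemma L1a: "1 \<le> i \<Longrightarrow> i < n \<Longrightarrow> 1 \<le> s \<Longrightarrow> s \<le> t \<Longrightarrow> t < n \<Longrightarrow> Suc i < s \<or> Suc t < i \<Longrightarrow>
   SC RR [i] (X i) (I s t) (U s t)"
proof (induction s t rule: U.induct)
  case (1 s t)
  show ?case
  proof (cases "s < t")
    case True
    have "SC RR [i] (X i) ([s] @ I (Suc s) t) (Br [s] (X s) (I (Suc s) t) (U (Suc s) t))"
      using 1 True by (intro SC_br_right SC_letters) auto
    moreover have "[s] @ I (Suc s) t = I s t" using True by (intro I_cons) simp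
    ultimately show ?thesis using True by (simp only: U_eq[OF True])
  next
    case False
    hence "s = t" using 1 by simp
    then show ?thesis using 1 by (simp add: U_same I_same SC_letters)
  qed
qed

lemma L1b: "1 \<le> i \<Longrightarrow> i < n \<Longrightarrow> 1 \<le> s \<Longrightarrow> s \<le> t \<Longrightarrow> t < n \<Longrightarrow> Suc i < s \<or> Suc t < i \<Longrightarrow>
   SC RR (I s t) (U s t) [i] (X i)"
proof -
  assume h: "1 \<le> i" "i < n" "1 \<le> s" "s \<le> t" "t < n" "Suc i < s \<or> Suc t < i"
  have "Q [i] (I s t) = 1"
    using h by (rule_tac Q_far_gen) (auto intro!: Q_letter_far)
  hence "P [i] (I s t) * P (I s t) [i] = 1" unfolding Q_def .
  then show ?thesis using L1a[OF h] by (rule SC_sym)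
qed

lemma L1c: "1 \<le> k \<Longrightarrow> k \<le> m \<Longrightarrow> 1 \<le> s \<Longrightarrow> s \<le> t \<Longrightarrow> t < n \<Longrightarrow> Suc m < s \<Longrightarrow>
   SC RR (I k m) (U k m) (I s t) (U s t)"
proof (induction k m rule: U.induct)
  case (1 k m)
  show ?case
  proof (cases "k < m")
    case True
    have "SC RR ([k] @ I (Suc k) m) (Br [k] (X k) (I (Suc k) m) (U (Suc k) m)) (I s t) (U s t)"
      using 1 True by (intro SC_br_left L1a) auto
    moreover have "[k] @ I (Suc k) m = I k m" using True by (intro I_cons) simp
    ultimately show ?thesis using True by (simp only: U_eq[OF True])
  next
    case False
    hence "k = m" using 1 by simp
    then show ?thesis using 1 by (simp add: U_same I_same L1a)
  qed
qed

lemma L1d: "1 \<le> k \<Longrightarrow> k \<le> m \<Longrightarrow> 1 \<le> s \<Longrightarrow> s \<le> t \<Longrightarrow> t < n \<Longrightarrow> Suc m < s \<Longrightarrow>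
   SC RR (I s t) (U s t) (I k m) (U k m)"
proof -
  assume h: "1 \<le> k" "k \<le> m" "1 \<le> s" "s \<le> t" "t < n" "Suc m < s"
  have "Q (I k m) (I s t) = 1"
    using h by (intro Q_I_far) auto
  hence "P (I k m) (I s t) * P (I s t) (I k m) = 1" unfolding Q_def .
  then show ?thesis using L1c[OF h] by (rule SC_sym)
qed


lemma I_split: "k \<le> Suc m \<Longrightarrow> m \<le> t \<Longrightarrow> I k t = I k m @ I (Suc m) t"
  by (rule upt_split) auto

lemma L2: "1 \<le> k \<Longrightarrow> k < m \<Longrightarrow> m < n \<Longrightarrow> Z RR (Br [k] (X k) (I k m) (U k m))"
proof -
  assume h: "1 \<le> k" "k < m" "m < n"
  show ?thesis
  proof (cases "m = Suc k")
    case True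
    have "U k m = Br [k] (X k) [Suc k] (X (Suc k))" using True by (simp add: U_eq U_same I_same)
    moreover have "I k m = [k, Suc k]" using True by (simp add: upt_Suc)
    ultimately show ?thesis using R1 h True by simp
  next
    case False
    hence km: "Suc k < m" using h by simp
    define W where "W = U (Suc (Suc k)) m"
    define \<gamma> where "\<gamma> = I (Suc (Suc k)) m"
    define D0 where "D0 = Br [k] (X k) [Suc k] (X (Suc k))"
    have Ik1: "I (Suc k) m = [Suc k] @ \<gamma>" unfolding \<gamma>_def using km by (subst I_cons) auto
    have Ik: "I k m = ([k] @ [Suc k]) @ \<gamma>" using Ik1 h by (simp add: I_cons[symmetric])
    have Uk: "U k m = Br [k] (X k) ([Suc k] @ \<gamma>) (Br [Suc k] (X (Suc k)) \<gamma> W)"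
      using h km unfolding W_def Ik1[symmetric] by (simp add: U_eq \<gamma>_def)
    have sc: "SC RR [k] (X k) \<gamma> W" unfolding \<gamma>_def W_def using h km by (intro L1a) auto
    have "eqv RR (Br [k] (X k) (I k m) (U k m)) (Br [k] (X k) (I k m) (Br ([k] @ [Suc k]) D0 \<gamma> W))"
      unfolding Uk D0_def by (rule eqv_br_right, rule Jred[OF sc])
    also have "eqv RR \<dots> (Br ([k] @ ([k] @ [Suc k])) (Br [k] (X k) ([k] @ [Suc k]) D0) \<gamma> W)"
      unfolding Ik by (rule Jred[OF sc])
    finally have e: "eqv RR (Br [k] (X k) (I k m) (U k m)) (Br ([k] @ ([k] @ [Suc k])) (Br [k] (X k) ([k] @ [Suc k]) D0) \<gamma> W)" .
    have "Z RR (Br [k] (X k) ([k] @ [Suc k]) D0)" unfolding D0_def using R1 h km by simp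
    hence "Z RR (Br ([k] @ ([k] @ [Suc k])) (Br [k] (X k) ([k] @ [Suc k]) D0) \<gamma> W)" by (rule Z_br_left)
    with e show ?thesis by (rule eqv_Z)
  qed
qed

lemma L3: "1 \<le> k \<Longrightarrow> k < m \<Longrightarrow> m < n \<Longrightarrow> Z RR (Br (I k m) (U k m) [m] (X m))"
proof (induction k m rule: U.induct)
  case (1 k m)
  show ?case
  proof (cases "m = Suc k")
    case True
    have "U k m = Br [k] (X k) [Suc k] (X (Suc k))" using True by (simp add: U_eq U_same I_same)
    moreover have "I k m = [k, Suc k]" using True by (simp add: upt_Suc)
    ultimately show ?thesis using R2 1 True by simp
  next
    case False
    hence km: "Suc k < m" using 1 by simp
    have IH: "Z RR (Br (I (Suc k) m) (U (Suc k) m) [m] (X m))" using 1 km by simp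
    have sc: "SC RR [k] (X k) [m] (X m)" using 1 km by (intro SC_letters) auto
    have e: "eqv RR (Br [k] (X k) (I (Suc k) m @ [m]) (Br (I (Suc k) m) (U (Suc k) m) [m] (X m)))
       (Br ([k] @ I (Suc k) m) (Br [k] (X k) (I (Suc k) m) (U (Suc k) m)) [m] (X m))"
      by (rule Jred[OF sc])
    have "Z RR (Br [k] (X k) (I (Suc k) m @ [m]) (Br (I (Suc k) m) (U (Suc k) m) [m] (X m)))"
      using IH by (rule Z_br_right)
    hence "Z RR (Br ([k] @ I (Suc k) m) (Br [k] (X k) (I (Suc k) m) (U (Suc k) m)) [m] (X m))"
      using e by (metis eqv_Z eqv_sym)
    moreover have "[k] @ I (Suc k) m = I k m" using 1 by (intro I_cons) simp
    ultimately show ?thesis using 1 by (simp add: U_eq)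
  qed
qed

lemma SPL: "1 \<le> k \<Longrightarrow> k \<le> m \<Longrightarrow> m < t \<Longrightarrow> t < n \<Longrightarrow>
   eqv RR (U k t) (Br (I k m) (U k m) (I (Suc m) t) (U (Suc m) t))"
proof (induction "m - k" arbitrary: k)
  case 0
  hence "k = m" by simp
  then show ?case using 0 by (simp add: U_eq U_same I_same)
next
  case (Suc d)
  hence km: "k < m" by simp
  have IH: "eqv RR (U (Suc k) t) (Br (I (Suc k) m) (U (Suc k) m) (I (Suc m) t) (U (Suc m) t))"
    using Suc by simp
  have sc: "SC RR [k] (X k) (I (Suc m) t) (U (Suc m) t)" using Suc km by (intro L1a) auto
  have "U k t = Br [k] (X k) (I (Suc k) t) (U (Suc k) t)" using Suc km by (simp add: U_eq)
  also have "eqv RR \<dots> (Br [k] (X k) (I (Suc k) m @ I (Suc m) t) (Br (I (Suc k) m) (U (Suc k) m) (I (Suc m) t) (U (Suc m) t)))"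
    using IH Suc km by (subst I_split[of "Suc k" m t]) (auto intro: eqv_br_right)
  also have "eqv RR \<dots> (Br ([k] @ I (Suc k) m) (Br [k] (X k) (I (Suc k) m) (U (Suc k) m)) (I (Suc m) t) (U (Suc m) t))"
    by (rule Jred[OF sc])
  also have "[k] @ I (Suc k) m = I k m" using km by (intro I_cons) simp
  also have "Br [k] (X k) (I (Suc k) m) (U (Suc k) m) = U k m" using km by (simp add: U_eq)
  finally show ?case .
qed


lemma Q_adj_left: "1 \<le> j \<Longrightarrow> Suc j \<le> m \<Longrightarrow> m < n \<Longrightarrow> Q [j] (I (Suc j) m) = inverse q"
proof -
  assume h: "1 \<le> j" "Suc j \<le> m" "m < n"
  have sp: "I (Suc j) m = [Suc j] @ I (Suc (Suc j)) m" using h by (simp add: upt_conv_Cons)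
  have "Q [j] (I (Suc (Suc j)) m) = 1" by (rule Q_far_gen) (use h in \<open>auto intro!: Q_letter_far\<close>)
  moreover have "Q [j] [Suc j] = inverse q" using h by (intro Q_letter_adj) auto
  ultimately show ?thesis unfolding sp Q_app_right by simp
qed

lemma U_SPL1: "1 \<le> k \<Longrightarrow> k \<le> i \<Longrightarrow> Suc i < n \<Longrightarrow>
  eqv RR (U k (Suc i)) (Br (I k i) (U k i) [Suc i] (X (Suc i)))"
  using SPL[of k i "Suc i"] by (simp add: U_same I_same)

lemma L4: "1 \<le> k \<Longrightarrow> k \<le> i \<Longrightarrow> Suc i < m \<Longrightarrow> m < n \<Longrightarrow> Z RR (Br (I k m) (U k m) [Suc i] (X (Suc i)))"
proof -
  assume h: "1 \<le> k" "k \<le> i" "Suc i < m" "m < n"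
  define j where "j = Suc i"
  define \<alpha> where "\<alpha> = I k i"
  define a where "a = U k i"
  define \<gamma> where "\<gamma> = I (Suc j) m"
  define c where "c = U (Suc j) m"
  have pbb: "P [j] [j] = q" unfolding j_def using h by (intro P_letter) auto
  have qbc: "P [j] \<gamma> * P \<gamma> [j] = inverse q"
    using Q_adj_left[of j m] h unfolding Q_def \<gamma>_def j_def by auto
  have e1: "eqv RR (U k j) (Br \<alpha> a [j] (X j))" unfolding \<alpha>_def a_def j_def using h by (intro U_SPL1) auto
  have "Z RR (Br (I k j) (U k j) [j] (X j))" unfolding j_def using h by (intro L3) auto
  moreover have "I k j = \<alpha> @ [j]" unfolding \<alpha>_def j_def using h by (simp add: upt_Suc)
  ultimately have r2: "Z RR (Br (\<alpha> @ [j]) (Br \<alpha> a [j] (X j)) [j] (X j))"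
    using e1 by (metis eqv_Z eqv_br_left eqv_sym)
  have "Z RR (Br [j] (X j) (I j m) (U j m))" unfolding j_def using h by (intro L2) auto
  moreover have "I j m = [j] @ \<gamma>" unfolding \<gamma>_def j_def using h by (simp add: upt_conv_Cons)
  moreover have "U j m = Br [j] (X j) \<gamma> c" unfolding \<gamma>_def c_def j_def using h by (simp add: U_eq)
  ultimately have r3: "Z RR (Br [j] (X j) ([j] @ \<gamma>) (Br [j] (X j) \<gamma> c))" by simp
  have r5: "SC RR \<alpha> a \<gamma> c" unfolding \<alpha>_def a_def \<gamma>_def c_def j_def using h by (intro L1c) auto
  have T: "Z RR (Br (\<alpha> @ [j] @ \<gamma>) (Br \<alpha> a ([j] @ \<gamma>) (Br [j] (X j) \<gamma> c)) [j] (X j))"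
    by (rule T2[OF qm1 q0 pbb qbc r2 r3 r5])
  have "eqv RR (U k m) (Br \<alpha> a (I j m) (U j m))" unfolding \<alpha>_def a_def j_def using h by (intro SPL) auto
  hence e2: "eqv RR (U k m) (Br \<alpha> a ([j] @ \<gamma>) (Br [j] (X j) \<gamma> c))"
    using \<open>I j m = [j] @ \<gamma>\<close> \<open>U j m = Br [j] (X j) \<gamma> c\<close> by simp
  have x1: "I k m = I k j @ \<gamma>" unfolding \<gamma>_def j_def using h by (intro I_split) auto
  have x2: "I k j = \<alpha> @ [j]" unfolding \<alpha>_def j_def using h by (simp add: upt_Suc)
  have "I k m = \<alpha> @ [j] @ \<gamma>" using x1 x2 by simp
  then show ?thesis unfolding j_def[symmetric] using T e2 by (metis eqv_Z eqv_br_left)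
qed

lemma Bp: "1 \<le> k \<Longrightarrow> k < s \<Longrightarrow> s \<le> t \<Longrightarrow> t \<le> m \<Longrightarrow> m < n \<Longrightarrow> SC RR (I k m) (U k m) (I s t) (U s t)"
proof (induction s t rule: U.induct)
  case (1 s t)
  have letter: "SC RR (I k m) (U k m) [j] (X j)" if "k < j" "j \<le> m" for j
  proof (cases "j = m")
    case True then show ?thesis unfolding SC_def True using 1 that by (intro L3) auto
  next
    case False
    obtain i where ji: "j = Suc i" using \<open>k < j\<close> by (cases j) auto
    show ?thesis unfolding SC_def ji using 1 that False ji by (intro L4) auto
  qed
  show ?case
  proof (cases "s < t")
    case True
    have "SC RR (I k m) (U k m) ([s] @ I (Suc s) t) (Br [s] (X s) (I (Suc s) t) (U (Suc s) t))"
      using 1 True by (intro SC_br_right letter) auto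
    moreover have "[s] @ I (Suc s) t = I s t" using True by (intro I_cons) simp
    ultimately show ?thesis using True by (simp only: U_eq[OF True])
  next
    case False
    hence "s = t" using 1 by simp
    then show ?thesis using 1 by (simp add: U_same I_same letter)
  qed
qed

lemma L5: "1 \<le> k \<Longrightarrow> k \<le> m \<Longrightarrow> Suc m < n \<Longrightarrow> Z RR (Br (I k m) (U k m) (I k (Suc m)) (U k (Suc m)))"
proof (induction m)
  case 0 then show ?case by simp
next
  case (Suc i)
  show ?case
  proof (cases "k = Suc i")
    case True
    have "U k (Suc k) = Br [k] (X k) [Suc k] (X (Suc k))" by (simp add: U_eq U_same I_same)
    moreover have "I k (Suc k) = [k, Suc k]" by (simp add: upt_Suc)
    ultimately show ?thesis using R1 Suc True by (simp add: U_same I_same)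
  next
    case False
    hence ki: "k \<le> i" using Suc by simp
    define m where "m = Suc i"
    define \<alpha> where "\<alpha> = I k i"
    define a where "a = U k i"
    have paa: "P \<alpha> \<alpha> = q" unfolding \<alpha>_def using Suc ki by (intro P_I_self) auto
    have qab: "P \<alpha> [m] * P [m] \<alpha> = inverse q"
      using Q_I_adj[of k i] Suc ki unfolding Q_def \<alpha>_def m_def by auto
    have pbb: "P [m] [m] = q" unfolding m_def using Suc by (intro P_letter) auto
    have qbc: "P [m] [Suc m] * P [Suc m] [m] = inverse q"
      using Q_letter_adj[of m] Suc unfolding Q_def m_def by auto
    have e1: "eqv RR (U k m) (Br \<alpha> a [m] (X m))" unfolding \<alpha>_def a_def m_def using Suc ki by (intro U_SPL1) auto
    have Ikm: "I k m = \<alpha> @ [m]" unfolding \<alpha>_def m_def using ki by (simp add: upt_Suc)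
    have "Z RR (Br (I k i) (U k i) (I k (Suc i)) (U k (Suc i)))" using Suc ki by simp
    hence r1: "Z RR (Br \<alpha> a (\<alpha> @ [m]) (Br \<alpha> a [m] (X m)))"
      using e1 Ikm unfolding \<alpha>_def a_def m_def by (metis eqv_Z eqv_br_right eqv_sym)
    have "Z RR (Br (I k m) (U k m) [m] (X m))" unfolding m_def using Suc ki by (intro L3) auto
    hence r2: "Z RR (Br (\<alpha> @ [m]) (Br \<alpha> a [m] (X m)) [m] (X m))"
      using e1 Ikm by (metis eqv_Z eqv_br_left eqv_sym)
    have r3: "Z RR (Br [m] (X m) ([m] @ [Suc m]) (Br [m] (X m) [Suc m] (X (Suc m))))"
      using R1[of m] Suc unfolding m_def by simp
    have r5: "SC RR \<alpha> a [Suc m] (X (Suc m))" unfolding \<alpha>_def a_def m_def using Suc ki by (intro L1b) auto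
    have T: "Z RR (Br (\<alpha> @ [m]) (Br \<alpha> a [m] (X m)) (\<alpha> @ [m] @ [Suc m]) (Br \<alpha> a ([m] @ [Suc m]) (Br [m] (X m) [Suc m] (X (Suc m)))))"
      by (rule T1[OF qm1 q0 paa qab pbb qbc r1 r2 r3 r5])
    have "eqv RR (U k (Suc m)) (Br \<alpha> a (I m (Suc m)) (U m (Suc m)))"
      unfolding \<alpha>_def a_def m_def using Suc ki by (intro SPL) auto
    moreover have "U m (Suc m) = Br [m] (X m) [Suc m] (X (Suc m))" by (simp add: U_eq U_same I_same)
    moreover have "I m (Suc m) = [m] @ [Suc m]" by (simp add: upt_Suc)
    ultimately have e2: "eqv RR (U k (Suc m)) (Br \<alpha> a ([m] @ [Suc m]) (Br [m] (X m) [Suc m] (X (Suc m))))" by simp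
    have Ik2: "I k (Suc m) = \<alpha> @ [m] @ [Suc m]" unfolding \<alpha>_def m_def using ki by (simp add: upt_Suc)
    have "eqv RR (Br (I k m) (U k m) (I k (Suc m)) (U k (Suc m)))
       (Br (\<alpha> @ [m]) (Br \<alpha> a [m] (X m)) (\<alpha> @ [m] @ [Suc m]) (Br \<alpha> a ([m] @ [Suc m]) (Br [m] (X m) [Suc m] (X (Suc m)))))"
      unfolding Ikm Ik2 using e1 e2 by (metis eqv_br_left eqv_br_right eqv_trans)
    then show ?thesis using T unfolding m_def by (rule eqv_Z)
  qed
qed

lemma Cp: "1 \<le> k \<Longrightarrow> k \<le> m \<Longrightarrow> m < t \<Longrightarrow> t < n \<Longrightarrow> Z RR (Br (I k m) (U k m) (I k t) (U k t))"
proof -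
  assume h: "1 \<le> k" "k \<le> m" "m < t" "t < n"
  show ?thesis
  proof (cases "t = Suc m")
    case True then show ?thesis using h by (simp add: L5)
  next
    case False
    hence mt: "Suc m < t" using h by simp
    define A where "A = U k m"
    define x :: "('g, 'k) sga" where "x = X (Suc m)"
    define B where "B = U (Suc (Suc m)) t"
    define \<gamma> where "\<gamma> = I (Suc (Suc m)) t"
    define C where "C = Br (I k m) A [Suc m] x"
    have sc: "SC RR (I k m) A \<gamma> B" unfolding A_def \<gamma>_def B_def using h mt by (intro L1c) auto
    have "eqv RR (U k t) (Br (I k m) A (I (Suc m) t) (U (Suc m) t))" unfolding A_def using h by (intro SPL) auto
    moreover have "I (Suc m) t = [Suc m] @ \<gamma>" unfolding \<gamma>_def using mt by (simp add: upt_conv_Cons)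
    moreover have "U (Suc m) t = Br [Suc m] x \<gamma> B" unfolding x_def \<gamma>_def B_def using mt by (simp add: U_eq)
    ultimately have "eqv RR (U k t) (Br (I k m) A ([Suc m] @ \<gamma>) (Br [Suc m] x \<gamma> B))" by simp
    also have "eqv RR \<dots> (Br (I k m @ [Suc m]) C \<gamma> B)" unfolding C_def by (rule Jred[OF sc])
    finally have e1: "eqv RR (U k t) (Br (I k m @ [Suc m]) C \<gamma> B)" .
    have s1: "I k t = I k (Suc m) @ \<gamma>" unfolding \<gamma>_def using h mt by (intro I_split) auto
    have s2: "I k (Suc m) = I k m @ [Suc m]" using h by (simp add: upt_Suc)
    have Ikt: "I k t = (I k m @ [Suc m]) @ \<gamma>" using s1 s2 by simp
    have "eqv RR (Br (I k m) A (I k t) (U k t)) (Br (I k m) A ((I k m @ [Suc m]) @ \<gamma>) (Br (I k m @ [Suc m]) C \<gamma> B))"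
      unfolding Ikt[symmetric] using e1 by (rule eqv_br_right)
    also have "eqv RR \<dots> (Br (I k m @ (I k m @ [Suc m])) (Br (I k m) A (I k m @ [Suc m]) C) \<gamma> B)"
      by (rule Jred[OF sc])
    finally have e2: "eqv RR (Br (I k m) A (I k t) (U k t)) (Br (I k m @ (I k m @ [Suc m])) (Br (I k m) A (I k m @ [Suc m]) C) \<gamma> B)" .
    have "Z RR (Br (I k m) A (I k (Suc m)) (U k (Suc m)))" unfolding A_def using h mt by (intro L5) auto
    moreover have "eqv RR (U k (Suc m)) C" unfolding C_def A_def x_def using h mt by (intro U_SPL1) auto
    moreover have "I k (Suc m) = I k m @ [Suc m]" using h by (simp add: upt_Suc)
    ultimately have "Z RR (Br (I k m) A (I k m @ [Suc m]) C)" by (metis eqv_Z eqv_br_right eqv_sym)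
    hence "Z RR (Br (I k m @ (I k m @ [Suc m])) (Br (I k m) A (I k m @ [Suc m]) C) \<gamma> B)" by (rule Z_br_left)
    with e2 show ?thesis unfolding A_def by (rule eqv_Z)
  qed
qed

end



declare std_bracket.simps[simp del]

context sp begin

lemma std_split_I: "k < m \<Longrightarrow> std_split (I k m) = 1"
  unfolding std_split_def
proof (rule Least_equality)
  assume km: "k < m"
  have t: "take 1 (I k m) = [k]" using km by (simp add: upt_conv_Cons)
  have d: "drop 1 (I k m) = I (Suc k) m" by simp
  show "0 < (1::nat) \<and> 1 < length (I k m) \<and> standard (take 1 (I k m)) \<and> standard (drop 1 (I k m))"
    using km std_intv[of k k] std_intv[of "Suc k" m] unfolding t d by (simp add: I_same)
qed auto

lemma std_bracket_I: "k \<le> m \<Longrightarrow> std_bracket chi g (I k m) = U k m"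
proof (induction k m rule: U.induct)
  case (1 k m)
  show ?case
  proof (cases "k < m")
    case True
    have "std_bracket chi g (I k m) = Br [k] (std_bracket chi g [k]) (I (Suc k) m) (std_bracket chi g (I (Suc k) m))"
      using True std_split_I[OF True]
      by (subst std_bracket.simps) (simp add: upt_conv_Cons)
    also have "std_bracket chi g [k] = X k" by (subst std_bracket.simps) simp
    also have "std_bracket chi g (I (Suc k) m) = U (Suc k) m" using 1 True by simp
    finally show ?thesis using True by (simp add: U_eq)
  next
    case False
    hence "k = m" using 1 by simp
    then show ?thesis by (subst std_bracket.simps) (simp add: I_same U_same)
  qed
qed

theorem main:
  "set u \<subseteq> {1..<n} \<Longrightarrow> standard u \<Longrightarrow>
   (\<exists>k m. 1 \<le> k \<and> k \<le> m \<and> m < n \<and> u = [k..<m+1]) \<or> Z RR (std_bracket chi g u)"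
proof (induction "length u" arbitrary: u rule: less_induct)
  case less
  have une: "u \<noteq> []" using less.prems standard_def by auto
  show ?case
  proof (cases "length u = 1")
    case True
    then obtain i where u: "u = [i]" by (cases u) auto
    hence "1 \<le> i" "i < n" using less.prems by auto
    then show ?thesis unfolding u by (intro disjI1 exI[of _ i]) (simp add: upt_Suc)
  next
    case False
    have "length u \<noteq> 0" using une by simp
    hence len2: "2 \<le> length u" using False by linarith
    define PP where "PP = (\<lambda>k. 0 < k \<and> k < length u \<and> standard (take k u) \<and> standard (drop k u))"
    define ks where "ks = std_split u"
    have ksd: "ks = (LEAST k. PP k)" unfolding ks_def std_split_def PP_def ..
    have ex: "\<exists>k. PP k" unfolding PP_def by (rule std_split_exists[OF less.prems(2) len2])
    have Pks: "PP ks" unfolding ksd by (rule LeastI_ex[OF ex])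
    have minks: "\<And>j. PP j \<Longrightarrow> ks \<le> j" unfolding ksd by (rule Least_le)
    define v where "v = take ks u"
    define w where "w = drop ks u"
    have uvw: "u = v @ w" unfolding v_def w_def by simp
    have ks: "0 < ks" "ks < length u" "standard v" "standard w" using Pks unfolding PP_def v_def w_def by auto
    have lv: "length v < length u" "length w < length u" using ks unfolding v_def w_def by auto
    have sv: "set v \<subseteq> {1..<n}" "set w \<subseteq> {1..<n}" using less.prems(1) uvw by auto
    have br: "std_bracket chi g u = Br v (std_bracket chi g v) w (std_bracket chi g w)"
      using False ks(1,2) unfolding v_def w_def ks_def by (subst std_bracket.simps) (simp add: Let_def)
    have IHv: "(\<exists>k m. 1 \<le> k \<and> k \<le> m \<and> m < n \<and> v = [k..<m+1]) \<or> Z RR (std_bracket chi g v)"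
      using less.hyps[OF lv(1) sv(1) ks(3)] .
    have IHw: "(\<exists>k m. 1 \<le> k \<and> k \<le> m \<and> m < n \<and> w = [k..<m+1]) \<or> Z RR (std_bracket chi g w)"
      using less.hyps[OF lv(2) sv(2) ks(4)] .
    show ?thesis
    proof (cases "Z RR (std_bracket chi g v) \<or> Z RR (std_bracket chi g w)")
      case True
      then show ?thesis unfolding br using Z_br_left Z_br_right by blast
    next
      case False
      then obtain k m s t where km: "1 \<le> k" "k \<le> m" "m < n" "v = I k m"
        and st: "1 \<le> s" "s \<le> t" "t < n" "w = I s t"
        using IHv IHw by auto
      have brU: "std_bracket chi g u = Br (I k m) (U k m) (I s t) (U s t)"
        unfolding br km(4) st(4) using km st std_bracket_I by simp
      have ustd: "standard (I k m @ I s t)" using less.prems(2) uvw km(4) st(4) by simp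
      consider "s < k" | "s = k" | "k < s \<and> s \<le> m" | "s = Suc m" | "Suc m < s" by linarith
      then show ?thesis
      proof cases
        case 1
        then show ?thesis using not_std_N1[of s k m t] ustd km st by simp
      next
        case 2
        show ?thesis
        proof (cases "t \<le> m")
          case True
          then show ?thesis using not_std_N2[of k t m] ustd km st 2 by simp
        next
          case False
          then show ?thesis unfolding brU 2 using km st by (intro disjI2 Cp) auto
        qed
      next
        case 3
        show ?thesis
        proof (cases "t \<le> m")
          case True
          have "SC RR (I k m) (U k m) (I s t) (U s t)" using km st 3 True by (intro Bp) auto
          then show ?thesis unfolding brU SC_def by simp
        next
          case False
          define j where "j = s - k"
          have tj: "take j u = I k (s - 1)" unfolding uvw km(4) st(4) j_def using 3 km
            by (simp add: min_def)
          have dj: "drop j u = I s m @ I s t" unfolding uvw km(4) st(4) j_def using 3 km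
            by simp
          have sk: "standard (I k (s - 1))" using 3 by (intro std_intv) auto
          have "PP j" unfolding PP_def tj dj using 3 km False sk
            by (auto simp: j_def uvw km(4) st(4) intro!: std_N3)
          hence "ks \<le> j" by (rule minks)
          moreover have "ks = length v" unfolding v_def using ks by simp
          moreover have "length v = Suc m - k" using km(4) by simp
          ultimately have False using km 3 unfolding j_def by linarith
          then show ?thesis ..
        qed
      next
        case 4
        have "u = [k..<t+1]" unfolding uvw km(4) st(4) 4 using km st 4 by (simp add: upt_split[symmetric])
        moreover have "k \<le> t" using km st 4 by simp
        ultimately show ?thesis using km st 4 by (intro disjI1 exI[of _ k] exI[of _ t]) auto
      next
        case 5
        have "SC RR (I k m) (U k m) (I s t) (U s t)" using km st 5 by (intro L1c) auto
        then show ?thesis unfolding brU SC_def by simp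
      qed
    qed
  qed
qed

end

theorem lemma3p1:
  fixes n :: nat and q :: "'k::field"
    and g :: "nat \<Rightarrow> 'g::ab_group_add" and chi :: "nat \<Rightarrow> 'g \<Rightarrow> 'k"
    and u :: "nat list"
  assumes n2: "n \<ge> 2"
    and q0: "q \<noteq> 0" and q3: "q ^ 3 \<noteq> 1" and qm1: "q \<noteq> -1"
    and chi_hom: "\<And>i a b. chi i (a + b) = chi i a * chi i b"
    and chi_nz: "\<And>i a. chi i a \<noteq> 0"
    and p_ii: "\<And>i. 1 \<le> i \<Longrightarrow> i < n \<Longrightarrow> chi i (g i) = q"
    and p_nn: "chi n (g n) = q ^ 2"
    and p_adj: "\<And>i. 1 < i \<Longrightarrow> i < n \<Longrightarrow> chi i (g (i - 1)) * chi (i - 1) (g i) = inverse q"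
    and p_last: "chi (n - 1) (g n) * chi n (g (n - 1)) = inverse (q ^ 2)"
    and p_far: "\<And>i j. 1 \<le> i \<Longrightarrow> i + 1 < j \<Longrightarrow> j \<le> n \<Longrightarrow> chi i (g j) * chi j (g i) = 1"
    and u_letters: "set u \<subseteq> {1..<n}"
    and u_std: "standard u"
  shows "(\<exists>k m. 1 \<le> k \<and> k \<le> m \<and> m < n \<and> u = [k..<m+1])
         \<or> zero_in_U n chi g (std_bracket chi g u)"
proof -
  interpret sp chi g n q
    by unfold_locales (use assms in auto)
  show ?thesis unfolding zero_in_U_def using main[OF u_letters u_std] .
qed


end
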